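(* Let $G$ be a connected graph of order $n$ with maximum degree $\Delta(G)\leq n-2$, and let $w\in V(G)$ with $d(w)=\Delta(G)$. If the graph $G-N[w]$ (obtained by deleting $w$ and all its neighbours) has a Hamiltonian cycle, then $prc(G)\leq \frac{n+\Delta(G)}{2}+1$.
   Context: A path in an edge-coloured graph is a rainbow path if its edges receive pairwise distinct colours. An edge-colouring is proper if adjacent edges receive distinct colours. The proper rainbow connection number $prc(G)$ of a nontrivial connected graph $G$ is the minimum number of colours in a proper edge-colouring of $G$ such that every two distinct vertices are joined by a rainbow path. $N[w]$ denotes the closed neighbourhood of $w$. *)

theory Defs
  imports Complex_Main
begin

definition simple_graph :: "'a set \<Rightarrow> 'a set set \<Rightarrow> bool" where
  "simple_graph V E \<longleftrightarrow> finite V \<and> (\<forall>e\<in>E. e \<subseteq> V \<and> card e = 2)"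

definition neighbours :: "'a set \<Rightarrow> 'a set set \<Rightarrow> 'a \<Rightarrow> 'a set" where
  "neighbours V E v = {u \<in> V. {u, v} \<in> E}"

definition degree :: "'a set \<Rightarrow> 'a set set \<Rightarrow> 'a \<Rightarrow> nat" where
  "degree V E v = card (neighbours V E v)"

definition max_degree :: "'a set \<Rightarrow> 'a set set \<Rightarrow> nat" where
  "max_degree V E = Max (degree V E ` V)"

definition closed_nbhd :: "'a set \<Rightarrow> 'a set set \<Rightarrow> 'a \<Rightarrow> 'a set" where
  "closed_nbhd V E w = insert w (neighbours V E w)"

definition del_vertices_E :: "'a set \<Rightarrow> 'a set set \<Rightarrow> 'a set \<Rightarrow> 'a set set" where
  "del_vertices_E V E S = {e \<in> E. e \<subseteq> V - S}"

fun walk_edges :: "'a list \<Rightarrow> 'a set list" where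
  "walk_edges (x # y # xs) = {x, y} # walk_edges (y # xs)"
| "walk_edges _ = []"

definition is_path :: "'a set \<Rightarrow> 'a set set \<Rightarrow> 'a list \<Rightarrow> 'a \<Rightarrow> 'a \<Rightarrow> bool" where
  "is_path V E p u v \<longleftrightarrow> p \<noteq> [] \<and> hd p = u \<and> last p = v \<and> distinct p \<and>
     set p \<subseteq> V \<and> set (walk_edges p) \<subseteq> E"

definition connected_graph :: "'a set \<Rightarrow> 'a set set \<Rightarrow> bool" where
  "connected_graph V E \<longleftrightarrow> (\<forall>u\<in>V. \<forall>v\<in>V. \<exists>p. is_path V E p u v)"

definition hamiltonian :: "'a set \<Rightarrow> 'a set set \<Rightarrow> bool" where
  "hamiltonian V E \<longleftrightarrow> (\<exists>p. distinct p \<and> set p = V \<and> length p \<ge> 3 \<and>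
     set (walk_edges p) \<subseteq> E \<and> {last p, hd p} \<in> E)"

definition proper_colouring :: "'a set set \<Rightarrow> ('a set \<Rightarrow> nat) \<Rightarrow> bool" where
  "proper_colouring E c \<longleftrightarrow> (\<forall>e\<in>E. \<forall>f\<in>E. e \<noteq> f \<and> e \<inter> f \<noteq> {} \<longrightarrow> c e \<noteq> c f)"

definition rainbow_path :: "'a set \<Rightarrow> 'a set set \<Rightarrow> ('a set \<Rightarrow> nat) \<Rightarrow> 'a list \<Rightarrow> 'a \<Rightarrow> 'a \<Rightarrow> bool" where
  "rainbow_path V E c p u v \<longleftrightarrow> is_path V E p u v \<and> distinct (map c (walk_edges p))"

definition rainbow_connected :: "'a set \<Rightarrow> 'a set set \<Rightarrow> ('a set \<Rightarrow> nat) \<Rightarrow> bool" where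
  "rainbow_connected V E c \<longleftrightarrow>
     (\<forall>u\<in>V. \<forall>v\<in>V. u \<noteq> v \<longrightarrow> (\<exists>p. rainbow_path V E c p u v))"

definition prc :: "'a set \<Rightarrow> 'a set set \<Rightarrow> nat" where
  "prc V E = (LEAST k. \<exists>c. c ` E \<subseteq> {..<k} \<and> proper_colouring E c \<and> rainbow_connected V E c)"

end

theory Submission
  imports Defs
begin

definition dg :: "'a set set \<Rightarrow> 'a \<Rightarrow> nat" where
  "dg F x = card {e\<in>F. x \<in> e}"

definition miss :: "'a set set \<Rightarrow> ('a set \<Rightarrow> nat) \<Rightarrow> 'a \<Rightarrow> nat \<Rightarrow> bool" where
  "miss F c x i \<longleftrightarrow> (\<forall>e\<in>F. x \<in> e \<longrightarrow> c e \<noteq> i)"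

definition colourable :: "'a set set \<Rightarrow> nat set \<Rightarrow> bool" where
  "colourable F P \<longleftrightarrow> (\<exists>c. c ` F \<subseteq> P \<and> proper_colouring F c)"

definition closedK :: "'a set set \<Rightarrow> ('a set \<Rightarrow> nat) \<Rightarrow> nat \<Rightarrow> nat \<Rightarrow> 'a set \<Rightarrow> bool" where
  "closedK F c i j K \<longleftrightarrow> (\<forall>e\<in>F. c e \<in> {i,j} \<longrightarrow> e \<inter> K \<noteq> {} \<longrightarrow> e \<subseteq> K)"

definition swapc :: "('a set \<Rightarrow> nat) \<Rightarrow> nat \<Rightarrow> nat \<Rightarrow> 'a set \<Rightarrow> 'a set \<Rightarrow> nat" where
  "swapc c i j K e = (if c e \<in> {i,j} \<and> e \<subseteq> K then (if c e = i then j else i) else c e)"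

lemma swap_proper:
  assumes "proper_colouring F c" "closedK F c i j K" "i \<noteq> j"
  shows "proper_colouring F (swapc c i j K)"
  unfolding proper_colouring_def
proof (intro ballI impI)
  fix e f assume e: "e \<in> F" and f: "f \<in> F" and ef: "e \<noteq> f \<and> e \<inter> f \<noteq> {}"
  have cef: "c e \<noteq> c f" using assms(1) e f ef unfolding proper_colouring_def by blast
  show "swapc c i j K e \<noteq> swapc c i j K f"
  proof (cases "c e \<in> {i,j} \<and> e \<subseteq> K")
    case True
    show ?thesis
    proof (cases "c f \<in> {i,j} \<and> f \<subseteq> K")
      case True2: True
      then show ?thesis using True cef assms(3) unfolding swapc_def by auto
    next
      case False
      have "c f \<notin> {i,j}"
      proof
        assume "c f \<in> {i,j}"
        moreover have "f \<inter> K \<noteq> {}" using ef True by blast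
        ultimately have "f \<subseteq> K" using assms(2) f unfolding closedK_def by blast
        with False \<open>c f \<in> {i,j}\<close> show False by blast
      qed
      then show ?thesis using True False unfolding swapc_def by auto
    qed
  next
    case False
    show ?thesis
    proof (cases "c f \<in> {i,j} \<and> f \<subseteq> K")
      case True
      have "c e \<notin> {i,j}"
      proof
        assume "c e \<in> {i,j}"
        moreover have "e \<inter> K \<noteq> {}" using ef True by blast
        ultimately have "e \<subseteq> K" using assms(2) e unfolding closedK_def by blast
        with False \<open>c e \<in> {i,j}\<close> show False by blast
      qed
      then show ?thesis using True False unfolding swapc_def by auto
    next
      case False2: False
      then show ?thesis using False cef unfolding swapc_def by auto
    qed
  qed
qed

lemma swap_range:
  assumes "c ` F \<subseteq> P" "i \<in> P" "j \<in> P"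
  shows "swapc c i j K ` F \<subseteq> P"
  using assms unfolding swapc_def by auto

lemma swap_miss_in:
  assumes "closedK F c i j K" "x \<in> K" "i \<noteq> j"
  shows "miss F (swapc c i j K) x j \<longleftrightarrow> miss F c x i"
  using assms unfolding miss_def closedK_def swapc_def
  by (smt (verit, ccfv_threshold) Int_iff empty_iff insert_iff)

lemma swap_miss_out:
  assumes "x \<notin> K"
  shows "miss F (swapc c i j K) x l \<longleftrightarrow> miss F c x l"
  using assms unfolding miss_def swapc_def by auto

lemma swap_miss_other:
  assumes "l \<notin> {i,j}" "i \<noteq> j"
  shows "miss F (swapc c i j K) x l \<longleftrightarrow> miss F c x l"
  using assms unfolding miss_def swapc_def by auto

lemma properD: "proper_colouring F c \<Longrightarrow> e \<in> F \<Longrightarrow> f \<in> F \<Longrightarrow> e \<noteq> f \<Longrightarrow> e \<inter> f \<noteq> {} \<Longrightarrow> c e \<noteq> c f"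
  unfolding proper_colouring_def by simp
lemma card2_ne: "card {a,b} = 2 \<Longrightarrow> a \<noteq> b" by (cases "a = b") simp_all

lemma two_col:
  assumes pr: "proper_colouring F c" and c2: "\<forall>e\<in>F. card e = 2"
    and a: "{y,a} \<in> F" "c {y,a} \<in> {i,j}" and b: "{y,b} \<in> F" "c {y,b} \<in> {i,j}" and ab: "a \<noteq> b"
  shows "\<not> miss F c y i"
proof -
  have ya: "y \<noteq> a" using card2_ne[of y a] c2 a(1) by simp
  have "{y,a} \<noteq> {y,b}" using ab ya by (simp add: doubleton_eq_iff)
  moreover have "{y,a} \<inter> {y,b} \<noteq> {}" by simp
  ultimately have "c {y,a} \<noteq> c {y,b}" using properD[OF pr a(1) b(1)] by simp
  then have "c {y,a} = i \<or> c {y,b} = i" using a(2) b(2) by auto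
  then show ?thesis using a(1) b(1) unfolding miss_def by auto
qed

lemma deg2:
  assumes pr: "proper_colouring F c" and c2: "\<forall>e\<in>F. card e = 2"
    and a: "{y,a} \<in> F" "c {y,a} \<in> {i,j}" and b: "{y,b} \<in> F" "c {y,b} \<in> {i,j}"
    and z: "{y,z} \<in> F" "c {y,z} \<in> {i,j}"
    and d: "a \<noteq> b" "a \<noteq> z" "b \<noteq> z"
  shows False
proof -
  have ne: "y \<noteq> a" "y \<noteq> b" "y \<noteq> z" using c2 a(1) b(1) z(1) card2_ne[of y a] card2_ne[of y b] card2_ne[of y z] by simp_all
  have "{y,a} \<noteq> {y,b}" "{y,a} \<noteq> {y,z}" "{y,b} \<noteq> {y,z}" using d ne by (simp_all add: doubleton_eq_iff)
  then have "c {y,a} \<noteq> c {y,b}" "c {y,a} \<noteq> c {y,z}" "c {y,b} \<noteq> c {y,z}"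
    using properD[OF pr] a(1) b(1) z(1) by simp_all
  then show False using a(2) b(2) z(2) by auto
qed

lemma walk_closed:
  assumes fin: "finite F" and c2: "\<forall>e\<in>F. card e = 2" and pr: "proper_colouring F c"
    and mu: "miss F c u i"
  shows "\<exists>K b. u \<in> K \<and> closedK F c i j K \<and> (\<forall>x\<in>K. miss F c x i \<longrightarrow> x = u \<or> x = b)"
proof -
  define adj where "adj x y \<longleftrightarrow> {x,y} \<in> F \<and> c {x,y} \<in> {i,j}" for x y
  have adj_sym: "adj x y \<longleftrightarrow> adj y x" for x y unfolding adj_def by (simp add: insert_commute)
  define A where "A = insert u (\<Union>F)"
  have finA: "finite A" unfolding A_def using fin c2
    by (metis Union_iff card.infinite finite_Union finite_insert zero_neq_numeral)
  define W where "W = {xs. xs \<noteq> [] \<and> hd xs = u \<and> distinct xs \<and> set xs \<subseteq> A \<and>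
      (\<forall>t. Suc t < length xs \<longrightarrow> adj (xs!t) (xs!Suc t))}"
  have finW: "finite W"
    by (rule finite_subset[OF _ finite_subset_distinct[OF finA]]) (auto simp: W_def)
  have uW: "[u] \<in> W" unfolding W_def A_def by auto
  define L where "L = Max (length ` W)"
  obtain xs where xsW: "xs \<in> W" and xsL: "length xs = L"
    using Max_in[of "length ` W"] finW uW unfolding L_def by fastforce
  have maxL: "length ys \<le> L" if "ys \<in> W" for ys
    using Max_ge finW that unfolding L_def by auto
  have xs: "xs \<noteq> []" "hd xs = u" "distinct xs" "set xs \<subseteq> A"
    "\<And>t. Suc t < length xs \<Longrightarrow> adj (xs!t) (xs!Suc t)" using xsW unfolding W_def by auto
  have hd0: "xs!0 = u" using xs by (simp add: hd_conv_nth)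
  have key: "z \<in> set xs" if y: "y \<in> set xs" and ayz: "adj y z" for y z
  proof -
    obtain t where t: "t < length xs" "xs!t = y" using y by (metis in_set_conv_nth)
    show ?thesis
    proof (cases "Suc t = length xs")
      case True
      show ?thesis
      proof (rule ccontr)
        assume zn: "z \<notin> set xs"
        have zA: "z \<in> A" using ayz unfolding adj_def A_def by auto
        have "xs @ [z] \<in> W"
          unfolding W_def
        proof (intro CollectI conjI allI impI)
          show "xs @ [z] \<noteq> []" by simp
          show "hd (xs @ [z]) = u" using xs by simp
          show "distinct (xs @ [z])" using xs zn by simp
          show "set (xs @ [z]) \<subseteq> A" using xs zA by simp
          fix t' assume "Suc t' < length (xs @ [z])"
          then have "t' < length xs" by simp
          show "adj ((xs @ [z]) ! t') ((xs @ [z]) ! Suc t')"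
          proof (cases "Suc t' < length xs")
            case True
            then show ?thesis using xs(5)[OF True] by (simp add: nth_append)
          next
            case False
            then have "t' = t" using True \<open>t' < length xs\<close> by simp
            then show ?thesis using t True ayz by (simp add: nth_append)
          qed
        qed
        then have "length (xs @ [z]) \<le> L" by (rule maxL)
        then show False using xsL by simp
      qed
    next
      case False
      then have st: "Suc t < length xs" using t by simp
      define n where "n = xs ! Suc t"
      have ayn: "adj y n" using xs(5)[OF st] t unfolding n_def by simp
      show ?thesis
      proof (cases "z = n")
        case True then show ?thesis using st n_def by simp
      next
        case zn: False
        show ?thesis
        proof (cases t)
          case 0
          then have "y = u" using t hd0 by simp
          then have "\<not> miss F c u i" using two_col[OF pr c2, of u n i j z] ayn ayz zn
            unfolding adj_def by auto
          then show ?thesis using mu by simp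
        next
          case (Suc t0)
          define p where "p = xs ! t0"
          have "adj p y" using xs(5)[of t0] t Suc unfolding p_def by simp
          then have ayp: "adj y p" using adj_sym by simp
          have pn: "p \<noteq> n" unfolding p_def n_def using xs(3) st Suc
            by (simp add: nth_eq_iff_index_eq)
          show ?thesis
          proof (cases "z = p")
            case True then show ?thesis unfolding p_def using Suc t by simp
          next
            case False
            then show ?thesis using deg2[OF pr c2, of y p i j n z] ayp ayn ayz pn zn
              unfolding adj_def by auto
          qed
        qed
      qed
    qed
  qed
  have cl: "closedK F c i j (set xs)"
    unfolding closedK_def
  proof (intro ballI impI)
    fix e assume eF: "e \<in> F" and ce: "c e \<in> {i,j}" and ek: "e \<inter> set xs \<noteq> {}"
    obtain y z where e: "e = {y,z}" using c2 eF by (meson card_2_iff)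
    show "e \<subseteq> set xs"
    proof (cases "y \<in> set xs")
      case True
      have "adj y z" using eF ce e unfolding adj_def by simp
      then show ?thesis using key True e by simp
    next
      case False
      then have zin: "z \<in> set xs" using ek e by auto
      have "adj z y" using eF ce e unfolding adj_def by (simp add: insert_commute)
      then show ?thesis using key zin e by simp
    qed
  qed
  have ms: "x = u \<or> x = last xs" if x: "x \<in> set xs" and mx: "miss F c x i" for x
  proof -
    obtain t where t: "t < length xs" "xs!t = x" using x by (metis in_set_conv_nth)
    show ?thesis
    proof (cases "t = 0")
      case True then show ?thesis using t hd0 by simp
    next
      case False
      show ?thesis
      proof (cases "Suc t = length xs")
        case True then show ?thesis using t xs(1) by (metis diff_Suc_1 last_conv_nth)
      next
        case False2: False
        then have st: "Suc t < length xs" using t by simp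
        obtain t0 where t0: "t = Suc t0" using False by (metis not0_implies_Suc)
        have a1: "adj x (xs ! Suc t)" using xs(5)[OF st] t by simp
        have a2: "adj (xs ! t0) x" using xs(5)[of t0] t t0 by simp
        have ne: "xs ! t0 \<noteq> xs ! Suc t" using xs(3) st t0 by (simp add: nth_eq_iff_index_eq)
        have "\<not> miss F c x i" using two_col[OF pr c2, of x "xs ! t0" i j "xs ! Suc t"] a1 a2 ne adj_sym
          unfolding adj_def by auto
        then show ?thesis using mx by simp
      qed
    qed
  qed
  have uin: "u \<in> set xs" using hd_in_set[OF xs(1)] xs(2) by simp
  show ?thesis
    apply (rule exI[of _ "set xs"], rule exI[of _ "last xs"])
    using cl ms uin by blast
qed

lemma edge_vu:
  assumes c2: "\<forall>e\<in>E. card e = 2" and e: "e \<in> E" "v \<in> e" "u \<in> e" and uv: "u \<noteq> v"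
  shows "e = {v,u}"
proof -
  obtain a b where ab: "e = {a,b}" "a \<noteq> b" using c2 e(1) by (meson card_2_iff)
  then show ?thesis using e uv by auto
qed

lemma dg_card_nbr:
  assumes fin: "finite E" and c2: "\<forall>e\<in>E. card e = 2"
  shows "dg E v = card {u. {v,u} \<in> E}"
proof -
  have "bij_betw (\<lambda>u. {v,u}) {u. {v,u} \<in> E} {e\<in>E. v \<in> e}"
    unfolding bij_betw_def
  proof
    show "inj_on (\<lambda>u. {v,u}) {u. {v,u} \<in> E}" by (auto simp: inj_on_def doubleton_eq_iff)
    show "(\<lambda>u. {v,u}) ` {u. {v,u} \<in> E} = {e\<in>E. v \<in> e}"
    proof
      show "(\<lambda>u. {v,u}) ` {u. {v,u} \<in> E} \<subseteq> {e\<in>E. v \<in> e}" by auto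
      show "{e\<in>E. v \<in> e} \<subseteq> (\<lambda>u. {v,u}) ` {u. {v,u} \<in> E}"
      proof
        fix e assume "e \<in> {e\<in>E. v \<in> e}"
        then have e: "e \<in> E" "v \<in> e" by auto
        obtain a b where ab: "e = {a,b}" "a \<noteq> b" using c2 e(1) by (meson card_2_iff)
        then have "e = {v, if a = v then b else a}" using e(2) by auto
        then show "e \<in> (\<lambda>u. {v,u}) ` {u. {v,u} \<in> E}" using e(1) by auto
      qed
    qed
  qed
  then show ?thesis unfolding dg_def by (simp add: bij_betw_same_card)
qed

lemma nbr_ne: "\<forall>e\<in>E. card e = 2 \<Longrightarrow> {v,u} \<in> E \<Longrightarrow> u \<noteq> v"
  using card2_ne[of v u] by auto

lemma dg_remove_v:
  assumes fin: "finite E" and c2: "\<forall>e\<in>E. card e = 2" and u: "{v,u} \<in> E"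
  shows "dg E u = Suc (dg {e\<in>E. v \<notin> e} u)"
proof -
  have uv: "u \<noteq> v" using nbr_ne[OF c2 u] .
  have "{e\<in>E. u \<in> e} = insert {v,u} {e\<in>{e\<in>E. v \<notin> e}. u \<in> e}"
  proof
    show "{e\<in>E. u \<in> e} \<subseteq> insert {v,u} {e\<in>{e\<in>E. v \<notin> e}. u \<in> e}"
    proof
      fix e assume "e \<in> {e\<in>E. u \<in> e}"
      then have e: "e \<in> E" "u \<in> e" by auto
      show "e \<in> insert {v,u} {e\<in>{e\<in>E. v \<notin> e}. u \<in> e}"
      proof (cases "v \<in> e")
        case True then show ?thesis using edge_vu[OF c2 e(1) True e(2) uv] by simp
      next
        case False then show ?thesis using e by simp
      qed
    qed
    show "insert {v,u} {e\<in>{e\<in>E. v \<notin> e}. u \<in> e} \<subseteq> {e\<in>E. u \<in> e}" using u by auto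
  qed
  moreover have "{v,u} \<notin> {e\<in>{e\<in>E. v \<notin> e}. u \<in> e}" by simp
  moreover have "finite {e\<in>{e\<in>E. v \<notin> e}. u \<in> e}" using fin by simp
  ultimately show ?thesis unfolding dg_def by simp
qed

lemma miss_count:
  assumes finP: "finite P" and finF: "finite F" and rng: "c ` F \<subseteq> P" and pr: "proper_colouring F c"
  shows "card {i\<in>P. miss F c u i} = card P - dg F u" and "dg F u \<le> card P"
proof -
  have inj: "inj_on c {e\<in>F. u \<in> e}"
    unfolding inj_on_def using properD[OF pr] by blast
  have im: "c ` {e\<in>F. u \<in> e} \<subseteq> P" using rng by auto
  have eq: "{i\<in>P. miss F c u i} = P - c ` {e\<in>F. u \<in> e}" unfolding miss_def by auto
  have cd: "card (c ` {e\<in>F. u \<in> e}) = dg F u" unfolding dg_def using card_image[OF inj] .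
  show "card {i\<in>P. miss F c u i} = card P - dg F u"
    unfolding eq using card_Diff_subset[OF _ im] finite_subset[OF im finP] cd by simp
  show "dg F u \<le> card P" using card_mono[OF finP im] cd by simp
qed

lemma sum_card_swap:
  assumes "finite A" "finite B"
  shows "(\<Sum>i\<in>B. card {u\<in>A. R u i}) = (\<Sum>u\<in>A. card {i\<in>B. R u i})"
proof -
  have "(\<Sum>i\<in>B. card {u\<in>A. R u i}) = (\<Sum>i\<in>B. \<Sum>u\<in>A. if R u i then 1 else 0)"
    using assms by (simp add: sum.If_cases Int_def)
  also have "\<dots> = (\<Sum>u\<in>A. \<Sum>i\<in>B. if R u i then 1 else 0)" by (rule sum.swap)
  also have "\<dots> = (\<Sum>u\<in>A. card {i\<in>B. R u i})"
    using assms by (simp add: sum.If_cases Int_def)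
  finally show ?thesis .
qed

lemma sub_single_card: "A \<subseteq> {b} \<Longrightarrow> card A \<le> 1"
  using card_mono[of "{b}" A] by simp

lemma key:
  fixes E :: "'a set set" and P :: "nat set" and v :: 'a and c :: "'a set \<Rightarrow> nat"
  defines "F \<equiv> {e\<in>E. v \<notin> e}" and "Nv \<equiv> {u. {v,u} \<in> E}" and "S \<equiv> {u. {v,u} \<in> E \<and> dg E u = card P}"
  assumes finE: "finite E" and c2: "\<forall>e\<in>E. card e = 2" and finP: "finite P"
    and rng: "c ` F \<subseteq> P" and pr: "proper_colouring F c"
    and dv1: "1 \<le> dg E v" and dvk: "dg E v \<le> card P" and du: "\<forall>u\<in>Nv. dg E u \<le> card P"
    and cS: "card S \<le> 1"
  shows "\<exists>c' i u0. c' ` F \<subseteq> P \<and> proper_colouring F c' \<and> i \<in> P \<and> u0 \<in> Nv \<and> miss F c' u0 i \<and>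
     card (({u\<in>Nv. card P \<le> dg E u + 1 \<and> miss F c' u i} - {u0}) \<union> (S - {u. miss F c' u i})) \<le> 1 \<and>
     (\<forall>u\<in>S. miss F c' u i \<longrightarrow> u = u0)"
proof -
  define k where "k = card P"
  have finF: "finite F" unfolding F_def using finE by simp
  have c2F: "\<forall>e\<in>F. card e = 2" unfolding F_def using c2 by simp
  have finU: "finite (\<Union>E)" using finE c2 by (metis card.infinite finite_Union zero_neq_numeral)
  have finNv: "finite Nv" unfolding Nv_def by (rule finite_subset[OF _ finU]) auto
  have cardNv: "card Nv = dg E v" unfolding Nv_def using dg_card_nbr[OF finE c2] by simp
  have k1: "1 \<le> k" using dv1 dvk unfolding k_def by simp
  have Nvne: "Nv \<noteq> {}" using cardNv dv1 by auto
  have SNv: "S \<subseteq> Nv" unfolding S_def Nv_def by auto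
  have finS: "finite S" using finite_subset[OF SNv finNv] .
  have Scases: "S = {} \<or> (\<exists>s. S = {s})"
    using cS finS by (metis card_1_singleton_iff card_0_eq le_SucE One_nat_def le_zero_eq)
  have mcnt: "card {i\<in>P. miss F d u i} = k + 1 - dg E u" "1 \<le> dg E u"
    if d: "d ` F \<subseteq> P" "proper_colouring F d" and u: "u \<in> Nv" for d u
  proof -
    have e1: "dg E u = Suc (dg F u)" unfolding F_def using dg_remove_v[OF finE c2] u unfolding Nv_def by simp
    have e2: "card {i\<in>P. miss F d u i} = card P - dg F u" "dg F u \<le> card P"
      using miss_count[OF finP finF d] by auto
    show "card {i\<in>P. miss F d u i} = k + 1 - dg E u" using e1 e2 unfolding k_def by simp
    show "1 \<le> dg E u" using e1 by simp
  qed
  have inS: "u \<in> S \<longleftrightarrow> dg E u = k" if "u \<in> Nv" for u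
    using that unfolding S_def Nv_def k_def by simp
  show ?thesis
  proof (cases "\<exists>j\<in>P. \<forall>u\<in>Nv. \<not> miss F c u j")
    case True
    then obtain j where jP: "j \<in> P" and jX: "\<forall>u\<in>Nv. \<not> miss F c u j" by blast
    obtain u1 where u1: "u1 \<in> Nv" "S \<noteq> {} \<longrightarrow> u1 \<in> S"
      using Scases Nvne SNv by blast
    have "card {i\<in>P. miss F c u1 i} \<ge> 1" using mcnt[OF rng pr u1(1)] bspec[OF du u1(1)] unfolding k_def by simp
    then have "{i\<in>P. miss F c u1 i} \<noteq> {}" by (intro notI) simp
    then obtain i where iP: "i \<in> P" and mi: "miss F c u1 i" by blast
    have ij: "i \<noteq> j" using mi jX u1(1) by auto
    obtain K b where K: "u1 \<in> K" "closedK F c i j K" "\<forall>x\<in>K. miss F c x i \<longrightarrow> x = u1 \<or> x = b"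
      using walk_closed[OF finF c2F pr mi, of j] by blast
    define c' where "c' = swapc c i j K"
    have pr': "proper_colouring F c'" unfolding c'_def using swap_proper[OF pr K(2) ij] .
    have rng': "c' ` F \<subseteq> P" unfolding c'_def using swap_range[OF rng iP jP] .
    have X': "u = u1 \<or> u = b" if "u \<in> Nv" "miss F c' u j" for u
    proof (cases "u \<in> K")
      case True
      then have "miss F c u i" using that(2) swap_miss_in[OF K(2) True ij] unfolding c'_def by simp
      then show ?thesis using K(3) True by blast
    next
      case False
      then have "miss F c u j" using that(2) swap_miss_out[OF False] unfolding c'_def by simp
      then show ?thesis using jX that(1) by blast
    qed
    have m1: "miss F c' u1 j" using swap_miss_in[OF K(2) K(1) ij] mi unfolding c'_def by simp
    have Ssub: "S \<subseteq> {u1}" if "S \<noteq> {}"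
      using that u1(2) cS finS by (metis card_le_Suc0_iff_eq One_nat_def subsetI singletonI)
    have part1: "({u\<in>Nv. card P \<le> dg E u + 1 \<and> miss F c' u j} - {u1}) \<union> (S - {u. miss F c' u j}) \<subseteq> {b}"
    proof
      fix x assume x: "x \<in> ({u\<in>Nv. card P \<le> dg E u + 1 \<and> miss F c' u j} - {u1}) \<union> (S - {u. miss F c' u j})"
      show "x \<in> {b}"
      proof (cases "x \<in> S - {u. miss F c' u j}")
        case True
        then have "S \<noteq> {}" by auto
        then have "x = u1" using Ssub True by auto
        then show ?thesis using True m1 by simp
      next
        case False
        then have "x \<in> Nv" "miss F c' x j" "x \<noteq> u1" using x by auto
        then show ?thesis using X' by auto
      qed
    qed
    have part2: "\<forall>u\<in>S. miss F c' u j \<longrightarrow> u = u1"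
      using Ssub by auto
    show ?thesis
      apply (rule exI[of _ c'], rule exI[of _ j], rule exI[of _ u1])
      using rng' pr' jP u1(1) m1 sub_single_card[OF part1] part2 by blast
  next
    case False
    then have allX: "\<forall>j\<in>P. \<exists>u\<in>Nv. miss F c u j" by blast
    define Hv where "Hv = {u\<in>Nv. k \<le> dg E u + 1}"
    define Y where "Y i = {u\<in>Hv. miss F c u i}" for i
    have finHv: "finite Hv" unfolding Hv_def using finNv by simp
    have cHv: "card Hv \<le> k" using card_mono[OF finNv, of Hv] cardNv dvk unfolding Hv_def k_def by auto
    have Yeq: "{u\<in>Nv. card P \<le> dg E u + 1 \<and> miss F c u i} = Y i" for i
      unfolding Y_def Hv_def k_def by auto
    have sumeq: "(\<Sum>i\<in>P. card (Y i)) = (\<Sum>u\<in>Hv. card {i\<in>P. miss F c u i})"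
      unfolding Y_def using sum_card_swap[OF finHv finP] .
    have mH: "card {i\<in>P. miss F c u i} = (if u \<in> S then 1 else 2)" if "u \<in> Hv" for u
    proof -
      have u: "u \<in> Nv" "k \<le> dg E u + 1" using that unfolding Hv_def by auto
      have "dg E u \<le> k" using du u(1) unfolding k_def by simp
      then show ?thesis using mcnt[OF rng pr u(1)] inS[OF u(1)] u(2) by auto
    qed
    have finY: "finite (Y i)" for i unfolding Y_def using finHv by simp
    have YX: "Y i \<subseteq> {u\<in>Nv. miss F c u i}" for i unfolding Y_def Hv_def by auto
    from Scases show ?thesis
    proof
      assume S0: "S = {}"
      have "(\<Sum>u\<in>Hv. card {i\<in>P. miss F c u i}) = (\<Sum>u\<in>Hv. 2)"
        using mH S0 by (intro sum.cong) auto
      then have sum2: "(\<Sum>i\<in>P. card (Y i)) \<le> 2 * k" using sumeq cHv by simp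
      have "\<exists>i\<in>P. card (Y i) \<le> 2"
      proof (rule ccontr)
        assume "\<not> (\<exists>i\<in>P. card (Y i) \<le> 2)"
        then have "\<forall>i\<in>P. 3 \<le> card (Y i)" by auto
        then have "(\<Sum>i\<in>P. 3) \<le> (\<Sum>i\<in>P. card (Y i))" by (intro sum_mono) auto
        then have "3 * k \<le> 2 * k" using sum2 unfolding k_def by simp
        then show False using k1 by simp
      qed
      then obtain i where iP: "i \<in> P" and ci: "card (Y i) \<le> 2" by blast
      obtain x where x: "x \<in> Nv" "miss F c x i" using allX iP by blast
      define u0 where "u0 = (if Y i = {} then x else (SOME y. y \<in> Y i))"
      have u0Y: "Y i \<noteq> {} \<longrightarrow> u0 \<in> Y i" unfolding u0_def by (simp add: some_in_eq)
      have u0NM: "u0 \<in> Nv \<and> miss F c u0 i"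
      proof (cases "Y i = {}")
        case True then show ?thesis using x unfolding u0_def by simp
      next
        case False then have "u0 \<in> Y i" using u0Y by simp
        then show ?thesis using YX[of i] by auto
      qed
      have u0: "u0 \<in> Nv" "miss F c u0 i" "Y i \<noteq> {} \<longrightarrow> u0 \<in> Y i" using u0NM u0Y by auto
      have "card (Y i - {u0}) \<le> 1"
      proof (cases "Y i = {}")
        case True then show ?thesis by simp
      next
        case False
        then have "u0 \<in> Y i" using u0 by simp
        then show ?thesis using ci finY card_Diff_singleton by (metis One_nat_def diff_le_mono one_add_one plus_1_eq_Suc diff_Suc_1)
      qed
      then show ?thesis
        apply (intro exI[of _ c] exI[of _ i] exI[of _ u0])
        using rng pr iP u0 Yeq S0 by simp
    next
      assume "\<exists>s. S = {s}"
      then obtain s where Ss: "S = {s}" by blast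
      have sNv: "s \<in> Nv" using Ss SNv by auto
      have sk: "dg E s = k" using inS[OF sNv] Ss by simp
      have "card {i\<in>P. miss F c s i} = 1" using mcnt[OF rng pr sNv] sk by simp
      then obtain i0 where isd: "{i\<in>P. miss F c s i} = {i0}" using card_1_singleton_iff[of "{i\<in>P. miss F c s i}"] by (auto simp: One_nat_def)
      have isP: "i0 \<in> P" and mis: "miss F c s i0" using isd by auto
      have sHv: "s \<in> Hv" unfolding Hv_def using sNv sk by simp
      have sY: "s \<in> Y i0" unfolding Y_def using sHv mis by simp
      show ?thesis
      proof (cases "card (Y i0) \<le> 2")
        case True
        have "card (Y i0 - {s}) \<le> 1" using True sY finY card_Diff_singleton
          by (metis One_nat_def diff_le_mono one_add_one plus_1_eq_Suc diff_Suc_1)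
        moreover have "S - {u. miss F c u i0} = {}" using Ss mis by auto
        ultimately show ?thesis
          apply (intro exI[of _ c] exI[of _ i0] exI[of _ s])
          using rng pr isP sNv mis Yeq Ss by simp
      next
        case False
        have "(\<Sum>u\<in>Hv. card {i\<in>P. miss F c u i}) = card {i\<in>P. miss F c s i} + (\<Sum>u\<in>Hv-{s}. card {i\<in>P. miss F c u i})"
          using sum.remove[OF finHv sHv] by simp
        also have "(\<Sum>u\<in>Hv-{s}. card {i\<in>P. miss F c u i}) = (\<Sum>u\<in>Hv-{s}. 2)"
          using mH Ss by (intro sum.cong) auto
        finally have "(\<Sum>i\<in>P. card (Y i)) = 1 + 2 * (card Hv - 1)"
          using sumeq mH[OF sHv] Ss finHv sHv by simp
        moreover have cH1: "1 \<le> card Hv" using card_gt_0_iff[of Hv] sHv finHv by auto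
        ultimately have sumle: "(\<Sum>i\<in>P. card (Y i)) + 1 \<le> 2 * k" using cHv
          by (cases "card Hv") auto
        have "\<exists>j\<in>P-{i0}. card (Y j) \<le> 1"
        proof (rule ccontr)
          assume "\<not> (\<exists>j\<in>P-{i0}. card (Y j) \<le> 1)"
          then have "\<forall>j\<in>P-{i0}. 2 \<le> card (Y j)"
          proof (intro ballI)
            fix j assume "j \<in> P-{i0}" and "\<not> (\<exists>j\<in>P-{i0}. card (Y j) \<le> 1)"
            then have "\<not> card (Y j) \<le> 1" by blast
            then show "2 \<le> card (Y j)" by linarith
          qed
          then have "(\<Sum>j\<in>P-{i0}. 2) \<le> (\<Sum>j\<in>P-{i0}. card (Y j))" by (intro sum_mono) auto
          moreover have "(\<Sum>i\<in>P. card (Y i)) = card (Y i0) + (\<Sum>j\<in>P-{i0}. card (Y j))"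
            using sum.remove[OF finP isP] by simp
          moreover have "card (P - {i0}) = k - 1" using isP finP unfolding k_def by simp
          ultimately have "3 + 2 * (k - 1) \<le> (\<Sum>i\<in>P. card (Y i))" using False by simp
          then show False using sumle k1 by simp
        qed
        then obtain j where jP: "j \<in> P" and jis: "j \<noteq> i0" and cj: "card (Y j) \<le> 1" by blast
        obtain x where x: "x \<in> Nv" "miss F c x j" using allX jP by blast
        define u0 where "u0 = (if Y j = {} then x else (SOME y. y \<in> Y j))"
        have u0Y: "Y j \<noteq> {} \<longrightarrow> u0 \<in> Y j" unfolding u0_def by (simp add: some_in_eq)
        have u0NM: "u0 \<in> Nv \<and> miss F c u0 j"
        proof (cases "Y j = {}")
          case True then show ?thesis using x unfolding u0_def by simp
        next
          case False then have "u0 \<in> Y j" using u0Y by simp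
          then show ?thesis using YX[of j] by auto
        qed
        have u0: "u0 \<in> Nv" "miss F c u0 j" "Y j \<noteq> {} \<longrightarrow> u0 \<in> Y j" using u0NM u0Y by auto
        have nsj: "\<not> miss F c s j" using isd jP jis by auto
        have "Y j - {u0} = {}"
        proof (cases "Y j = {}")
          case True then show ?thesis by simp
        next
          case False
          then have "u0 \<in> Y j" using u0 by simp
          moreover have "\<forall>a\<in>Y j. \<forall>b\<in>Y j. a = b" using cj card_le_Suc0_iff_eq[OF finY] by simp
          ultimately show ?thesis by auto
        qed
        then have "({u\<in>Nv. card P \<le> dg E u + 1 \<and> miss F c u j} - {u0}) \<union> (S - {u. miss F c u j}) \<subseteq> {s}"
          using Yeq Ss by auto
        then have cc: "card (({u\<in>Nv. card P \<le> dg E u + 1 \<and> miss F c u j} - {u0}) \<union> (S - {u. miss F c u j})) \<le> 1"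
          by (rule sub_single_card)
        have p2: "\<forall>u\<in>S. miss F c u j \<longrightarrow> u = u0" using Ss nsj by auto
        show ?thesis
          apply (intro exI[of _ c] exI[of _ j] exI[of _ u0])
          using rng pr jP u0(1,2) cc p2 by simp
      qed
    qed
  qed
qed

lemma proper_subset: "proper_colouring F c \<Longrightarrow> G \<subseteq> F \<Longrightarrow> proper_colouring G c"
  unfolding proper_colouring_def by (meson subsetD)

lemma S_aux:
  "\<forall>P E. card P = n \<longrightarrow> finite P \<longrightarrow> finite E \<longrightarrow> (\<forall>e\<in>E. card e = 2) \<longrightarrow> dg E v \<le> card P \<longrightarrow>
    (\<forall>u. {v,u} \<in> E \<longrightarrow> dg E u \<le> card P) \<longrightarrow> card {u. {v,u} \<in> E \<and> dg E u = card P} \<le> 1 \<longrightarrow>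
    colourable {e\<in>E. v \<notin> e} P \<longrightarrow> colourable E P"
proof (induction n rule: less_induct)
  case (less n)
  show ?case
  proof (intro allI impI)
    fix P :: "nat set" and E :: "'a set set"
    assume cP: "card P = n" and finP: "finite P" and finE: "finite E" and c2: "\<forall>e\<in>E. card e = 2"
      and dvk: "dg E v \<le> card P" and du: "\<forall>u. {v,u} \<in> E \<longrightarrow> dg E u \<le> card P"
      and cS: "card {u. {v,u} \<in> E \<and> dg E u = card P} \<le> 1"
      and col: "colourable {e\<in>E. v \<notin> e} P"
    define F where "F = {e\<in>E. v \<notin> e}"
    define Nv where "Nv = {u. {v,u} \<in> E}"
    define S where "S = {u. {v,u} \<in> E \<and> dg E u = card P}"
    define k where "k = card P"
    obtain c where rng: "c ` F \<subseteq> P" and pr: "proper_colouring F c"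
      using col unfolding colourable_def F_def by blast
    have finU: "finite (\<Union>E)" using finE c2 by (metis card.infinite finite_Union zero_neq_numeral)
    have finNv: "finite Nv" unfolding Nv_def by (rule finite_subset[OF _ finU]) auto
    show "colourable E P"
    proof (cases "dg E v = 0")
      case True
      have "{e\<in>E. v \<in> e} = {}" using True finE unfolding dg_def by simp
      then have "F = E" unfolding F_def by auto
      then show ?thesis using rng pr unfolding colourable_def by blast
    next
      case False
      then have dv1: "1 \<le> dg E v" by simp
      have du': "\<forall>u\<in>Nv. dg E u \<le> card P" using du unfolding Nv_def by simp
      obtain c' i u0 where rng': "c' ` F \<subseteq> P" and pr': "proper_colouring F c'" and iP: "i \<in> P"
        and u0: "u0 \<in> Nv" and mu0: "miss F c' u0 i"
        and cond1: "card (({u\<in>Nv. card P \<le> dg E u + 1 \<and> miss F c' u i} - {u0}) \<union> (S - {u. miss F c' u i})) \<le> 1"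
        and cond2: "\<forall>u\<in>S. miss F c' u i \<longrightarrow> u = u0"
        using key[OF finE c2 finP rng[unfolded F_def] pr[unfolded F_def] dv1 dvk du'[unfolded Nv_def] cS]
        unfolding F_def Nv_def S_def by blast
      define I where "I = {e\<in>F. c' e = i}"
      define E' where "E' = (E - I) - {{v,u0}}"
      define P' where "P' = P - {i}"
      have vu0: "{v,u0} \<in> E" using u0 unfolding Nv_def by simp
      have IF: "I \<subseteq> F" unfolding I_def by auto
      have FE: "F \<subseteq> E" unfolding F_def by auto
      have k1: "1 \<le> k" using dv1 dvk unfolding k_def by simp
      have cP': "card P' = k - 1" unfolding P'_def k_def using iP finP by simp
      have finE': "finite E'" unfolding E'_def using finE by simp
      have c2': "\<forall>e\<in>E'. card e = 2" unfolding E'_def using c2 by simp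
      have F': "{e\<in>E'. v \<notin> e} = F - I" unfolding E'_def F_def I_def by auto
      have col': "colourable {e\<in>E'. v \<notin> e} P'"
        unfolding colourable_def F'
      proof (intro exI conjI)
        show "c' ` (F - I) \<subseteq> P'" using rng' unfolding P'_def I_def by auto
        show "proper_colouring (F - I) c'" using proper_subset[OF pr'] by auto
      qed
      have dv': "dg E' v = dg E v - 1"
      proof -
        have "{e\<in>E'. v \<in> e} = {e\<in>E. v \<in> e} - {{v,u0}}" unfolding E'_def I_def F_def by auto
        then show ?thesis unfolding dg_def using vu0 finE by simp
      qed
      have nbr': "{v,u} \<in> E \<and> u \<noteq> u0" if "{v,u} \<in> E'" for u
        using that unfolding E'_def by (auto simp: doubleton_eq_iff)
      have dgf: "dg E' u = dg E u - (if miss F c' u i then 0 else 1)" if u: "{v,u} \<in> E" "u \<noteq> u0" for u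
      proof -
        have uv: "u \<noteq> v" using nbr_ne[OF c2 u(1)] .
        have eq: "{e\<in>E'. u \<in> e} = {e\<in>E. u \<in> e} - {e\<in>I. u \<in> e}"
          unfolding E'_def using uv u(2) by auto
        have sub: "{e\<in>I. u \<in> e} \<subseteq> {e\<in>E. u \<in> e}" using IF FE by auto
        have fin: "finite {e\<in>I. u \<in> e}" using finite_subset[OF sub] finE by simp
        have ci: "card {e\<in>I. u \<in> e} = (if miss F c' u i then 0 else 1)"
        proof (cases "miss F c' u i")
          case True
          then have "{e\<in>I. u \<in> e} = {}" unfolding I_def miss_def by auto
          then have "card {e\<in>I. u \<in> e} = 0" by (simp only: card.empty)
          then show ?thesis using True by simp
        next
          case False
          then obtain e0 where e0: "e0 \<in> F" "u \<in> e0" "c' e0 = i" unfolding miss_def by auto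
          have "{e\<in>I. u \<in> e} = {e0}"
          proof
            show "{e0} \<subseteq> {e\<in>I. u \<in> e}" using e0 unfolding I_def by auto
            show "{e\<in>I. u \<in> e} \<subseteq> {e0}"
            proof
              fix e assume "e \<in> {e\<in>I. u \<in> e}"
              then have e: "e \<in> F" "u \<in> e" "c' e = i" unfolding I_def by auto
              show "e \<in> {e0}"
              proof (rule ccontr)
                assume "e \<notin> {e0}"
                then have "c' e \<noteq> c' e0" using properD[OF pr' e(1) e0(1)] e(2) e0(2) by auto
                then show False using e(3) e0(3) by simp
              qed
            qed
          qed
          then show ?thesis using False by simp
        qed
        show ?thesis unfolding dg_def eq using card_Diff_subset[OF fin sub] ci by simp
      qed
      have dgE1: "1 \<le> dg E u" if "{v,u} \<in> E" for u
      proof -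
        have "{v,u} \<in> {e\<in>E. u \<in> e}" using that by simp
        then have "{e\<in>E. u \<in> e} \<noteq> {}" by blast
        moreover have "finite {e\<in>E. u \<in> e}" using finE by simp
        ultimately show ?thesis unfolding dg_def by (simp add: Suc_le_eq card_gt_0_iff)
      qed
      have du2: "\<forall>u. {v,u} \<in> E' \<longrightarrow> dg E' u \<le> card P'"
      proof (intro allI impI)
        fix u assume "{v,u} \<in> E'"
        then have u: "{v,u} \<in> E" "u \<noteq> u0" using nbr' by auto
        have dk: "dg E u \<le> k" using du u(1) unfolding k_def by simp
        show "dg E' u \<le> card P'"
        proof (cases "miss F c' u i")
          case True
          have "u \<notin> S" using cond2 True u(2) by auto
          then have "dg E u \<noteq> k" using u(1) unfolding S_def k_def by simp
          then show ?thesis using dgf[OF u] True dk cP' by simp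
        next
          case False
          then show ?thesis using dgf[OF u] dk cP' by simp
        qed
      qed
      have cS2: "card {u. {v,u} \<in> E' \<and> dg E' u = card P'} \<le> 1"
      proof -
        have sub: "{u. {v,u} \<in> E' \<and> dg E' u = card P'} \<subseteq>
          ({u\<in>Nv. card P \<le> dg E u + 1 \<and> miss F c' u i} - {u0}) \<union> (S - {u. miss F c' u i})"
        proof
          fix u assume "u \<in> {u. {v,u} \<in> E' \<and> dg E' u = card P'}"
          then have u1: "{v,u} \<in> E'" and d1: "dg E' u = k - 1" using cP' by auto
          then have u: "{v,u} \<in> E" "u \<noteq> u0" using nbr' by auto
          have dk: "dg E u \<le> k" using du u(1) unfolding k_def by simp
          have g1: "1 \<le> dg E u" using dgE1[OF u(1)] .
          show "u \<in> ({u\<in>Nv. card P \<le> dg E u + 1 \<and> miss F c' u i} - {u0}) \<union> (S - {u. miss F c' u i})"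
          proof (cases "miss F c' u i")
            case True
            then have "dg E u = k - 1" using dgf[OF u] d1 by simp
            then show ?thesis using True u k1 unfolding Nv_def k_def by simp
          next
            case False
            then have "dg E u - 1 = k - 1" using dgf[OF u] d1 by simp
            then have "dg E u = k" using g1 k1 by simp
            then show ?thesis using False u unfolding S_def k_def by simp
          qed
        qed
        have fin: "finite (({u\<in>Nv. card P \<le> dg E u + 1 \<and> miss F c' u i} - {u0}) \<union> (S - {u. miss F c' u i}))"
          using finNv unfolding S_def Nv_def by auto
        show ?thesis using card_mono[OF fin sub] cond1 by simp
      qed
      have "card P' < n" using cP' k1 cP unfolding k_def by simp
      moreover have "finite P'" unfolding P'_def using finP by simp
      moreover have "dg E' v \<le> card P'" using dv' dvk cP' unfolding k_def by simp
      ultimately have colE': "colourable E' P'"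
        using less[rule_format, of "card P'" P' E'] finE' c2' du2 cS2 col' by blast
      then obtain cs where rs: "cs ` E' \<subseteq> P'" and ps: "proper_colouring E' cs"
        unfolding colourable_def by blast
      define c2c where "c2c e = (if e \<in> E' then cs e else i)" for e
      have "c2c ` E \<subseteq> P" using rs iP unfolding c2c_def P'_def by auto
      moreover have "proper_colouring E c2c"
        unfolding proper_colouring_def
      proof (intro ballI impI)
        fix e f assume e: "e \<in> E" and f: "f \<in> E" and ef: "e \<noteq> f \<and> e \<inter> f \<noteq> {}"
        show "c2c e \<noteq> c2c f"
        proof (cases "e \<in> E'")
          case eE: True
          show ?thesis
          proof (cases "f \<in> E'")
            case True
            then show ?thesis using eE properD[OF ps eE True] ef unfolding c2c_def by simp
          next
            case False
            then show ?thesis using eE rs unfolding c2c_def P'_def by auto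
          qed
        next
          case eN: False
          show ?thesis
          proof (cases "f \<in> E'")
            case True
            then show ?thesis using eN rs unfolding c2c_def P'_def by auto
          next
            case fN: False
            have eI: "e \<in> I \<or> e = {v,u0}" using e eN unfolding E'_def by auto
            have fI: "f \<in> I \<or> f = {v,u0}" using f fN unfolding E'_def by auto
            have False
            proof (cases "e = {v,u0}")
              case True
              then have "f \<in> I" using fI ef by auto
              then have "f \<in> F" "c' f = i" unfolding I_def by auto
              then have "v \<notin> f" unfolding F_def by simp
              then have "u0 \<in> f" using ef True by auto
              then show False using mu0 \<open>f \<in> F\<close> \<open>c' f = i\<close> unfolding miss_def by auto
            next
              case False
              then have eI2: "e \<in> I" using eI by simp
              show False
              proof (cases "f = {v,u0}")
                case True
                have "e \<in> F" "c' e = i" using eI2 unfolding I_def by auto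
                then have "v \<notin> e" unfolding F_def by simp
                then have "u0 \<in> e" using ef True by auto
                then show False using mu0 \<open>e \<in> F\<close> \<open>c' e = i\<close> unfolding miss_def by auto
              next
                case False
                then have "f \<in> I" using fI by simp
                then have "c' e \<noteq> c' f" using properD[OF pr'] eI2 ef unfolding I_def by auto
                then show False using eI2 \<open>f \<in> I\<close> unfolding I_def by auto
              qed
            qed
            then show ?thesis by simp
          qed
        qed
      qed
      ultimately show ?thesis unfolding colourable_def by blast
    qed
  qed
qed

lemma S_lemma:
  assumes "finite P" "finite E" "\<forall>e\<in>E. card e = 2" "dg E v \<le> card P"
    "\<forall>u. {v,u} \<in> E \<longrightarrow> dg E u \<le> card P" "card {u. {v,u} \<in> E \<and> dg E u = card P} \<le> 1"
    "colourable {e\<in>E. v \<notin> e} P"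
  shows "colourable E P"
  using S_aux[of "card P" v] assms by blast

lemma dg_mono: "finite E \<Longrightarrow> F \<subseteq> E \<Longrightarrow> dg F x \<le> dg E x"
  unfolding dg_def by (rule card_mono) auto

lemma dg_less: "finite E \<Longrightarrow> F \<subseteq> E \<Longrightarrow> f \<in> E \<Longrightarrow> f \<notin> F \<Longrightarrow> x \<in> f \<Longrightarrow> dg F x + 1 \<le> dg E x"
proof -
  assume a: "finite E" "F \<subseteq> E" "f \<in> E" "f \<notin> F" "x \<in> f"
  have "{e\<in>F. x \<in> e} \<subset> {e\<in>E. x \<in> e}" using a by auto
  then have "card {e\<in>F. x \<in> e} < card {e\<in>E. x \<in> e}" using a(1) by (intro psubset_card_mono) auto
  then show ?thesis unfolding dg_def by simp
qed

lemma vizing_lite: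
  assumes finP: "finite P" and finE: "finite E" and c2: "\<forall>e\<in>E. card e = 2"
    and dg: "\<forall>x. dg E x + 1 \<le> card P"
  shows "colourable E P"
  using finE c2 dg
proof (induction E rule: finite_psubset_induct)
  case (psubset E)
  show ?case
  proof (cases "E = {}")
    case True
    then show ?thesis unfolding colourable_def proper_colouring_def by auto
  next
    case False
    then obtain e where e: "e \<in> E" by blast
    have "card e = 2" using psubset.prems e by simp
    then obtain v where v: "v \<in> e" by (metis card_2_iff insertI1)
    define F where "F = {e\<in>E. v \<notin> e}"
    have FE: "F \<subset> E" unfolding F_def using e v by auto
    have "colourable F P"
    proof (rule psubset.IH[OF FE])
      show "\<forall>e\<in>F. card e = 2" using psubset.prems unfolding F_def by simp
      show "\<forall>x. dg F x + 1 \<le> card P"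
        using psubset.prems(2) dg_mono[OF psubset.hyps(1), of F] FE by (meson add_le_mono1 le_trans psubset_imp_subset)
    qed
    moreover have "card {u. {v,u} \<in> E \<and> dg E u = card P} \<le> 1"
    proof -
      have "dg E u \<noteq> card P" for u using psubset.prems(2)[rule_format, of u] by simp
      then have eq: "{u. {v,u} \<in> E \<and> dg E u = card P} = {}" by simp
      show ?thesis unfolding eq by simp
    qed
    ultimately show ?thesis
      using S_lemma[OF finP psubset.hyps(1) psubset.prems(1)] psubset.prems(2) unfolding F_def
      by (meson add_leE)
  qed
qed

lemma vplus:
  assumes finE: "finite E" and c2: "\<forall>e\<in>E. card e = 2" and dgD: "\<forall>x. dg E x \<le> D" and D1: "1 \<le> D"
    and e0: "e0 \<in> E" "w \<notin> e0"
  shows "\<exists>c. c ` E \<subseteq> {..D} \<and> proper_colouring E c \<and> c e0 = D \<and> (\<forall>e\<in>E. w \<in> e \<longrightarrow> c e \<noteq> D)"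
proof -
  define Ew where "Ew = {e\<in>E. w \<notin> e}"
  define MS where "MS = {M. M \<subseteq> Ew \<and> e0 \<in> M \<and> (\<forall>a\<in>M. \<forall>b\<in>M. a \<noteq> b \<longrightarrow> a \<inter> b = {})}"
  have finMS: "finite MS"
    by (rule finite_subset[of _ "Pow Ew"]) (auto simp: MS_def Ew_def finE)
  have e0MS: "{e0} \<in> MS" unfolding MS_def Ew_def using e0 by auto
  obtain M where MMS: "M \<in> MS" and maxM: "\<forall>M'\<in>MS. card M' \<le> card M"
  proof -
    have "Max (card ` MS) \<in> card ` MS" using finMS e0MS by (intro Max_in) auto
    then obtain M where "M \<in> MS" "card M = Max (card ` MS)" by auto
    moreover have "\<forall>M'\<in>MS. card M' \<le> Max (card ` MS)" using finMS by simp
    ultimately show ?thesis using that by auto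
  qed
  have MEw: "M \<subseteq> Ew" and e0M: "e0 \<in> M" and disj: "\<forall>a\<in>M. \<forall>b\<in>M. a \<noteq> b \<longrightarrow> a \<inter> b = {}"
    using MMS unfolding MS_def by auto
  have finM: "finite M" using finite_subset[OF MEw] finE unfolding Ew_def by simp
  have maximal: "\<exists>f\<in>M. e \<inter> f \<noteq> {}" if "e \<in> Ew" "e \<notin> M" for e
  proof (rule ccontr)
    assume "\<not> (\<exists>f\<in>M. e \<inter> f \<noteq> {})"
    then have "insert e M \<in> MS" using that MMS unfolding MS_def by auto
    then have "card (insert e M) \<le> card M" using maxM by blast
    then show False using that(2) finM by simp
  qed
  define C where "C = \<Union>M"
  have wC: "w \<notin> C" using MEw unfolding C_def Ew_def by auto
  define R where "R = E - M"
  have finR: "finite R" unfolding R_def using finE by simp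
  have c2R: "\<forall>e\<in>R. card e = 2" unfolding R_def using c2 by simp
  have RE: "R \<subseteq> E" unfolding R_def by auto
  have dgRC: "dg R x + 1 \<le> D" if xC: "x \<in> C" for x
  proof -
    obtain f where f: "f \<in> M" "x \<in> f" using xC unfolding C_def by auto
    have "f \<in> E" using f MEw unfolding Ew_def by auto
    then have "dg R x + 1 \<le> dg E x" using dg_less[OF finE RE _ _ f(2)] f(1) unfolding R_def by simp
    then show ?thesis using dgD by (meson le_trans)
  qed
  have dgR: "dg F x \<le> D" if "F \<subseteq> R" for F x
    using dg_mono[OF finE, of F x] that RE dgD by (meson order_trans)
  have finU: "finite (\<Union>E)" using finE c2 by (metis card.infinite finite_Union zero_neq_numeral)
  define RA where "RA A = {e\<in>R. e \<subseteq> C \<union> {w} \<union> A}" for A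
  define R0 where "R0 = {e\<in>R. e \<subseteq> C}"
  have finP: "finite {..<D}" by simp
  have cP: "card {..<D} = D" by simp
  have col0: "colourable R0 {..<D}"
  proof (rule vizing_lite[OF finP])
    show "finite R0" unfolding R0_def using finR by simp
    show "\<forall>e\<in>R0. card e = 2" unfolding R0_def using c2R by simp
    show "\<forall>x. dg R0 x + 1 \<le> card {..<D}"
    proof
      fix x show "dg R0 x + 1 \<le> card {..<D}"
      proof (cases "x \<in> C")
        case True
        have "dg R0 x \<le> dg R x" using dg_mono[OF finR] unfolding R0_def by auto
        then show ?thesis using dgRC[OF True] by simp
      next
        case False
        have "{e\<in>R0. x \<in> e} = {}" unfolding R0_def using False by auto
        then have "dg R0 x = 0" unfolding dg_def by (simp only: card.empty)
        then show ?thesis using D1 by simp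
      qed
    qed
  qed
  have col1: "colourable (RA {}) {..<D}"
  proof (rule S_lemma[OF finP, of "RA {}" w])
    show "finite (RA {})" unfolding RA_def using finR by simp
    show "\<forall>e\<in>RA {}. card e = 2" unfolding RA_def using c2R by simp
    show "dg (RA {}) w \<le> card {..<D}" using dgR[of "RA {}"] unfolding RA_def by auto
    show "\<forall>u. {w, u} \<in> RA {} \<longrightarrow> dg (RA {}) u \<le> card {..<D}" using dgR[of "RA {}"] unfolding RA_def by auto
    have "dg (RA {}) u \<noteq> D" if "{w,u} \<in> RA {}" for u
    proof -
      have "u \<noteq> w" using nbr_ne[OF c2R, of w u] that unfolding RA_def by auto
      then have "u \<in> C" using that unfolding RA_def by auto
      then have "dg R u + 1 \<le> D" by (rule dgRC)
      moreover have "dg (RA {}) u \<le> dg R u" using dg_mono[OF finR] unfolding RA_def by auto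
      ultimately show ?thesis by simp
    qed
    then have eq: "{u. {w, u} \<in> RA {} \<and> dg (RA {}) u = card {..<D}} = {}" by auto
    show "card {u. {w, u} \<in> RA {} \<and> dg (RA {}) u = card {..<D}} \<le> 1" unfolding eq by simp
    have "{e \<in> RA {}. w \<notin> e} = R0" unfolding RA_def R0_def using wC by auto
    then show "colourable {e \<in> RA {}. w \<notin> e} {..<D}" using col0 by simp
  qed
  define Y where "Y = \<Union>E - C - {w}"
  have finY: "finite Y" unfolding Y_def using finU by simp
  have colA: "A \<subseteq> Y \<longrightarrow> colourable (RA A) {..<D}" if "finite A" for A
    using that
  proof (induction A rule: finite_induct)
    case empty
    then show ?case using col1 by simp
  next
    case (insert y A)
    show ?case
    proof
      assume sub: "insert y A \<subseteq> Y"
      then have yY: "y \<in> Y" and AY: "A \<subseteq> Y" by auto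
      have yC: "y \<notin> C" "y \<noteq> w" using yY unfolding Y_def by auto
      have IH: "colourable (RA A) {..<D}" using insert.IH AY by simp
      show "colourable (RA (insert y A)) {..<D}"
      proof (rule S_lemma[OF finP, of "RA (insert y A)" y])
        show "finite (RA (insert y A))" unfolding RA_def using finR by simp
        show "\<forall>e\<in>RA (insert y A). card e = 2" unfolding RA_def using c2R by simp
        show "dg (RA (insert y A)) y \<le> card {..<D}" using dgR[of "RA (insert y A)"] unfolding RA_def by auto
        show "\<forall>u. {y, u} \<in> RA (insert y A) \<longrightarrow> dg (RA (insert y A)) u \<le> card {..<D}"
          using dgR[of "RA (insert y A)"] unfolding RA_def by auto
        have "u = w" if u: "{y,u} \<in> RA (insert y A)" "dg (RA (insert y A)) u = card {..<D}" for u
        proof (rule ccontr)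
          assume uw: "u \<noteq> w"
          have yu: "{y,u} \<in> R" using u(1) unfolding RA_def by simp
          have uy: "u \<noteq> y" using nbr_ne[OF c2R yu] .
          show False
          proof (cases "u \<in> C")
            case True
            then have "dg R u + 1 \<le> D" by (rule dgRC)
            moreover have "dg (RA (insert y A)) u \<le> dg R u" using dg_mono[OF finR] unfolding RA_def by auto
            ultimately show False using u(2) by simp
          next
            case False
            have "{y,u} \<in> Ew" using yu uw yC(2) RE unfolding Ew_def by auto
            moreover have "{y,u} \<notin> M" using yC(1) unfolding C_def by auto
            ultimately obtain f where "f \<in> M" "{y,u} \<inter> f \<noteq> {}" using maximal by blast
            then have "y \<in> C \<or> u \<in> C" unfolding C_def by auto
            then show False using yC(1) False by simp
          qed
        qed
        then have "{u. {y, u} \<in> RA (insert y A) \<and> dg (RA (insert y A)) u = card {..<D}} \<subseteq> {w}" by auto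
        then show "card {u. {y, u} \<in> RA (insert y A) \<and> dg (RA (insert y A)) u = card {..<D}} \<le> 1"
          by (rule sub_single_card)
        have "{e \<in> RA (insert y A). y \<notin> e} = RA A" unfolding RA_def using yC insert.hyps(2) by auto
        then show "colourable {e \<in> RA (insert y A). y \<notin> e} {..<D}" using IH by simp
      qed
    qed
  qed
  have "RA Y = R"
  proof -
    have "e \<subseteq> C \<union> {w} \<union> Y" if "e \<in> R" for e using that RE unfolding Y_def by auto
    then show ?thesis unfolding RA_def by auto
  qed
  then have "colourable R {..<D}" using colA[OF finY] by simp
  then obtain cR where rR: "cR ` R \<subseteq> {..<D}" and pR: "proper_colouring R cR" unfolding colourable_def by blast
  define c where "c e = (if e \<in> M then D else cR e)" for e
  have "c ` E \<subseteq> {..D}" using rR unfolding c_def R_def by auto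
  moreover have "proper_colouring E c"
    unfolding proper_colouring_def
  proof (intro ballI impI)
    fix e f assume e: "e \<in> E" and f: "f \<in> E" and ef: "e \<noteq> f \<and> e \<inter> f \<noteq> {}"
    show "c e \<noteq> c f"
    proof (cases "e \<in> M")
      case True
      show ?thesis
      proof (cases "f \<in> M")
        case True2: True
        then show ?thesis using disj True ef by blast
      next
        case False
        then have "f \<in> R" using f unfolding R_def by simp
        then show ?thesis using rR True False unfolding c_def by auto
      qed
    next
      case False
      then have eR: "e \<in> R" using e unfolding R_def by simp
      show ?thesis
      proof (cases "f \<in> M")
        case True
        then show ?thesis using rR eR False unfolding c_def by auto
      next
        case False2: False
        then have "f \<in> R" using f unfolding R_def by simp
        then show ?thesis using properD[OF pR eR] ef False False2 unfolding c_def by simp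
      qed
    qed
  qed
  moreover have "c e0 = D" using e0M unfolding c_def by simp
  moreover have "\<forall>e\<in>E. w \<in> e \<longrightarrow> c e \<noteq> D"
  proof (intro ballI impI)
    fix e assume "e \<in> E" "w \<in> e"
    then have "e \<notin> M" using MEw unfolding Ew_def by auto
    then show "c e \<noteq> D" using rR \<open>e \<in> E\<close> unfolding c_def R_def by auto
  qed
  ultimately show ?thesis by blast
qed

lemma we_len: "length (walk_edges xs) = length xs - 1"
  by (induction xs rule: walk_edges.induct) auto

lemma we_nth: "Suc t < length xs \<Longrightarrow> walk_edges xs ! t = {xs!t, xs!Suc t}"
proof (induction xs arbitrary: t rule: walk_edges.induct)
  case (1 x y xs)
  then show ?case by (cases t) auto
qed auto

lemma we_append: "xs \<noteq> [] \<Longrightarrow> ys \<noteq> [] \<Longrightarrow> walk_edges (xs @ ys) = walk_edges xs @ {last xs, hd ys} # walk_edges ys"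
proof (induction xs)
  case Nil then show ?case by simp
next
  case (Cons a xs)
  show ?case
  proof (cases "xs = []")
    case True then show ?thesis using Cons.prems by (cases ys) auto
  next
    case False
    then obtain b xs' where xs: "xs = b # xs'" by (cases xs) auto
    then show ?thesis using Cons.IH Cons.prems False by auto
  qed
qed

lemma we_rev: "walk_edges (rev xs) = rev (walk_edges xs)"
proof (induction xs rule: walk_edges.induct)
  case (1 x y xs)
  have "walk_edges (rev (x # y # xs)) = walk_edges (rev (y # xs) @ [x])" by simp
  also have "\<dots> = walk_edges (rev (y # xs)) @ [{last (rev (y # xs)), x}]"
    using we_append[of "rev (y # xs)" "[x]"] by simp
  also have "\<dots> = rev (walk_edges (y # xs)) @ [{x, y}]" using 1 by (simp add: insert_commute)
  finally show ?case by simp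
qed auto

lemma we_set_sub: "set (walk_edges xs) \<subseteq> E \<longleftrightarrow> (\<forall>t. Suc t < length xs \<longrightarrow> {xs!t, xs!Suc t} \<in> E)"
proof
  assume a: "set (walk_edges xs) \<subseteq> E"
  show "\<forall>t. Suc t < length xs \<longrightarrow> {xs!t, xs!Suc t} \<in> E"
  proof (intro allI impI)
    fix t assume t: "Suc t < length xs"
    then have "t < length (walk_edges xs)" using we_len[of xs] by simp
    then have "walk_edges xs ! t \<in> set (walk_edges xs)" by simp
    then show "{xs!t, xs!Suc t} \<in> E" using a we_nth[OF t] by auto
  qed
next
  assume a: "\<forall>t. Suc t < length xs \<longrightarrow> {xs!t, xs!Suc t} \<in> E"
  show "set (walk_edges xs) \<subseteq> E"
  proof
    fix e assume "e \<in> set (walk_edges xs)"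
    then obtain t where t: "t < length (walk_edges xs)" "e = walk_edges xs ! t" by (auto simp: in_set_conv_nth)
    then have st: "Suc t < length xs" using we_len[of xs] by simp
    then show "e \<in> E" using a we_nth[OF st] t(2) by simp
  qed
qed

lemma path_rev: "is_path V E p a b \<Longrightarrow> is_path V E (rev p) b a"
  unfolding is_path_def by (simp add: we_rev hd_rev last_rev)

lemma rainbow_rev: "rainbow_path V E c p a b \<Longrightarrow> rainbow_path V E c (rev p) b a"
  unfolding rainbow_path_def by (simp add: path_rev we_rev rev_map[symmetric])

lemma path_append:
  assumes "is_path V E xs a x" "is_path V E ys y b" "{x,y} \<in> E" "set xs \<inter> set ys = {}"
  shows "is_path V E (xs @ ys) a b"
  using assms unfolding is_path_def by (auto simp: we_append)

lemma we_append_rainbow: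
  assumes "xs \<noteq> []" "ys \<noteq> []"
  shows "map c (walk_edges (xs @ ys)) = map c (walk_edges xs) @ c {last xs, hd ys} # map c (walk_edges ys)"
  using we_append[OF assms] by simp

lemma dvd_between: "(q::nat) dvd x \<Longrightarrow> q < x \<Longrightarrow> x < 2 * q \<Longrightarrow> False"
proof -
  assume a: "q dvd x" "q < x" "x < 2 * q"
  then obtain k where k: "x = q * k" by (auto elim: dvdE)
  show False
  proof (cases "k \<le> 1")
    case True
    then have "x \<le> q" using k by (metis mult.right_neutral mult_le_mono2)
    then show False using a by simp
  next
    case False
    then have "2 \<le> k" by simp
    then have "q * 2 \<le> x" using k by (metis mult_le_mono2)
    then show False using a by simp
  qed
qed

lemma dvd_pos_small: "(q::nat) dvd x \<Longrightarrow> 0 < x \<Longrightarrow> x < q \<Longrightarrow> False"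
  using dvd_imp_le by fastforce

lemma arc_pair:
  fixes m q t1 t2 d a :: nat
  assumes m3: "3 \<le> m" and qd: "q = (m+1) div 2" and t: "t1 < t2" "t2 < d" and dm: "d \<le> m div 2"
  shows "((a+t1) mod m) mod q \<noteq> ((a+t2) mod m) mod q"
proof
  assume eq: "((a+t1) mod m) mod q = ((a+t2) mod m) mod q"
  define i1 where "i1 = (a+t1) mod m"
  define dl where "dl = t2 - t1"
  have m0: "0 < m" using m3 by simp
  have i1m: "i1 < m" unfolding i1_def using m0 by simp
  have dl: "0 < dl" "dl < d" unfolding dl_def using t by auto
  have qge: "m div 2 \<le> q" "m \<le> 2 * q" "0 < q" using qd m3 by auto
  have e2: "a + t2 = (a + t1) + dl" unfolding dl_def using t by simp
  have i2: "(a+t2) mod m = (i1 + dl) mod m"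
    unfolding i1_def e2 by (simp add: mod_add_left_eq)
  show False
  proof (cases "i1 + dl < m")
    case True
    then have "(a+t2) mod m = i1 + dl" using i2 by simp
    then have "(i1 + dl) mod q = i1 mod q" using eq unfolding i1_def by simp
    then have "q dvd dl" using mod_eq_dvd_iff_nat[of i1 "i1 + dl" q] by simp
    then show False using dvd_pos_small[of q dl] dl dm qge by simp
  next
    case False
    have lt: "i1 + dl - m < m" using i1m dl dm by simp
    have "(i1 + dl) mod m = i1 + dl - m" using False lt by (simp add: mod_if)
    then have "(a+t2) mod m = i1 + dl - m" using i2 by simp
    then have "(i1 + dl - m) mod q = i1 mod q" using eq unfolding i1_def by simp
    have dlm: "dl < m" using dl dm by simp
    then have "q dvd (i1 - (i1 + dl - m))" using \<open>(i1 + dl - m) mod q = i1 mod q\<close> mod_eq_dvd_iff_nat[of "i1 + dl - m" i1 q] False by simp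
    moreover have "i1 - (i1 + dl - m) = m - dl" using False i1m by simp
    ultimately have "q dvd (m - dl)" by simp
    moreover have "q < m - dl" using dl dm qd by simp
    moreover have "m - dl < 2 * q" using dl qge by simp
    ultimately show False using dvd_between by blast
  qed
qed

lemma arc_dist:
  fixes m q d a :: nat
  assumes "3 \<le> m" "q = (m+1) div 2" "d \<le> m div 2"
  shows "distinct (map (\<lambda>t. ((a+t) mod m) mod q) [0..<d])"
  unfolding distinct_conv_nth
proof (intro allI impI)
  fix i j assume ij: "i < length (map (\<lambda>t. ((a+t) mod m) mod q) [0..<d])"
    "j < length (map (\<lambda>t. ((a+t) mod m) mod q) [0..<d])" "i \<noteq> j"
  then have "i < d" "j < d" by auto
  then show "map (\<lambda>t. ((a+t) mod m) mod q) [0..<d] ! i \<noteq> map (\<lambda>t. ((a+t) mod m) mod q) [0..<d] ! j"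
    using arc_pair[OF assms(1,2) _ _ assms(3)] ij(3)
    by (cases "i < j") (auto, metis nat_neq_iff)
qed

locale cycl =
  fixes m :: nat and cyc :: "nat \<Rightarrow> 'a" and Hs :: "'a set" and E :: "'a set set" and V :: "'a set"
  assumes m3: "3 \<le> m" and cyc_mod: "\<And>t. cyc (t mod m) = cyc t" and cyc_inj: "inj_on cyc {..<m}"
    and cyc_img: "cyc ` {..<m} = Hs" and cyc_edge: "\<And>t. {cyc t, cyc (Suc t)} \<in> E" and HV: "Hs \<subseteq> V"
begin

definition fwd :: "nat \<Rightarrow> nat \<Rightarrow> 'a list" where
  "fwd a d = map (\<lambda>t. cyc (a + t)) [0..<Suc d]"

lemma cyc_eq: "cyc x = cyc y \<longleftrightarrow> x mod m = y mod m"
proof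
  assume "cyc x = cyc y"
  then have "cyc (x mod m) = cyc (y mod m)" using cyc_mod by simp
  moreover have "x mod m < m" "y mod m < m" using m3 by auto
  ultimately show "x mod m = y mod m" using cyc_inj unfolding inj_on_def by blast
next
  assume "x mod m = y mod m"
  then show "cyc x = cyc y" using cyc_mod by metis
qed

lemma cyc_in: "cyc t \<in> Hs"
  using cyc_img cyc_mod m3 by (metis image_eqI lessThan_iff mod_less_divisor not_numeral_le_zero not_gr_zero)

lemma fwd_ne: "fwd a d \<noteq> []" unfolding fwd_def by simp
lemma fwd_hd: "hd (fwd a d) = cyc a" unfolding fwd_def by (simp add: upt_conv_Cons del: upt_Suc)
lemma fwd_last: "last (fwd a d) = cyc (a + d)" unfolding fwd_def by (simp add: last_map)
lemma fwd_set: "set (fwd a d) \<subseteq> Hs" unfolding fwd_def using cyc_in by auto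
lemma fwd_len: "length (fwd a d) = Suc d" unfolding fwd_def by simp
lemma fwd_nth: "t \<le> d \<Longrightarrow> fwd a d ! t = cyc (a + t)" unfolding fwd_def
  by (simp add: nth_map_upt del: upt_Suc)

lemma fwd_distinct: assumes "d < m" shows "distinct (fwd a d)"
  unfolding distinct_conv_nth fwd_len
proof (intro allI impI)
  fix i j assume ij: "i < Suc d" "j < Suc d" "i \<noteq> j"
  show "fwd a d ! i \<noteq> fwd a d ! j"
  proof
    assume "fwd a d ! i = fwd a d ! j"
    then have "cyc (a + i) = cyc (a + j)" using ij fwd_nth by simp
    then have e: "(a + i) mod m = (a + j) mod m" using cyc_eq by simp
    show False
    proof (cases "i < j")
      case True
      then have "m dvd (j - i)" using mod_eq_dvd_iff_nat[of "a+i" "a+j" m] e by simp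
      moreover have "j - i < m" using ij(2) assms by linarith
      ultimately show False using dvd_pos_small[of m "j - i"] True by simp
    next
      case False
      then have "j < i" using ij by simp
      then have "m dvd (i - j)" using mod_eq_dvd_iff_nat[of "a+j" "a+i" m] e by simp
      moreover have "i - j < m" using ij(1) assms by linarith
      ultimately show False using dvd_pos_small[of m "i - j"] \<open>j < i\<close> by simp
    qed
  qed
qed

lemma fwd_we: "walk_edges (fwd a d) = map (\<lambda>t. {cyc (a+t), cyc (Suc (a+t))}) [0..<d]"
proof (rule nth_equalityI)
  show "length (walk_edges (fwd a d)) = length (map (\<lambda>t. {cyc (a+t), cyc (Suc (a+t))}) [0..<d])"
    using we_len[of "fwd a d"] fwd_len[of a d] by simp
  fix t assume "t < length (walk_edges (fwd a d))"
  then have t: "t < d" using we_len[of "fwd a d"] fwd_len[of a d] by simp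
  then have "Suc t < length (fwd a d)" using fwd_len by simp
  then have "walk_edges (fwd a d) ! t = {fwd a d ! t, fwd a d ! Suc t}" by (rule we_nth)
  moreover have "fwd a d ! t = cyc (a + t)" "fwd a d ! Suc t = cyc (Suc (a + t))"
    using fwd_nth[of t d a] fwd_nth[of "Suc t" d a] t by auto
  ultimately show "walk_edges (fwd a d) ! t = map (\<lambda>t. {cyc (a+t), cyc (Suc (a+t))}) [0..<d] ! t"
    using t by simp
qed

lemma fwd_path: assumes "d < m" shows "is_path V E (fwd a d) (cyc a) (cyc (a + d))"
proof -
  have "set (fwd a d) \<subseteq> V" using fwd_set[of a d] HV by simp
  moreover have "set (walk_edges (fwd a d)) \<subseteq> E" unfolding fwd_we using cyc_edge by auto
  ultimately show ?thesis unfolding is_path_def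
    using fwd_ne fwd_hd fwd_last fwd_distinct[OF assms] by simp
qed

end

locale rb = cycl m cyc Hs E V for m cyc Hs E V +
  fixes w :: 'a and N :: "'a set" and u :: 'a and D :: nat and c :: "'a set \<Rightarrow> nat" and q :: nat
  assumes VZ: "V = insert w N \<union> Hs" and wN: "w \<notin> N" and wH: "w \<notin> Hs" and NH: "N \<inter> Hs = {}"
    and star: "\<forall>x\<in>N. {w,x} \<in> E" and uN: "u \<in> N" and uv0: "{u, cyc 0} \<in> E"
    and cprop: "proper_colouring E c" and c_uv0: "c {u, cyc 0} = D"
    and c_star: "\<forall>x\<in>N. c {w,x} < D"
    and c_arc: "\<And>t. 4 \<le> m \<or> t mod m < 2 \<Longrightarrow> c {cyc t, cyc (Suc t)} = D + 1 + ((t mod m) mod q)"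
    and qdef: "q = (m+1) div 2"
begin

lemma path1: "a \<in> V \<Longrightarrow> is_path V E [a] a a"
  unfolding is_path_def by simp

lemma path2: "{a,b} \<in> E \<Longrightarrow> a \<noteq> b \<Longrightarrow> a \<in> V \<Longrightarrow> b \<in> V \<Longrightarrow> is_path V E [a,b] a b"
  unfolding is_path_def by simp

lemma fwd_cols: "map c (walk_edges (fwd a d)) = map (\<lambda>t. c {cyc (a+t), cyc (Suc (a+t))}) [0..<d]"
  unfolding fwd_we by simp

lemma arc_rb:
  assumes d: "d \<le> m div 2" and m4: "4 \<le> m"
  shows "distinct (map c (walk_edges (fwd a d)))" "\<forall>e\<in>set (walk_edges (fwd a d)). D < c e"
proof -
  have "map c (walk_edges (fwd a d)) = map (\<lambda>t. D + 1 + ((a+t) mod m) mod q) [0..<d]"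
    unfolding fwd_cols using c_arc m4 by simp
  also have "\<dots> = map (\<lambda>x. D + 1 + x) (map (\<lambda>t. ((a+t) mod m) mod q) [0..<d])" by simp
  finally have eq: "map c (walk_edges (fwd a d)) = map (\<lambda>x. D + 1 + x) (map (\<lambda>t. ((a+t) mod m) mod q) [0..<d])" .
  have "distinct (map (\<lambda>t. ((a+t) mod m) mod q) [0..<d])" using arc_dist[OF m3 qdef d] .
  then show "distinct (map c (walk_edges (fwd a d)))" unfolding eq by (simp add: distinct_map inj_on_def)
  show "\<forall>e\<in>set (walk_edges (fwd a d)). D < c e"
    unfolding fwd_we using c_arc m4 by auto
qed

lemma arc0:
  assumes b: "b < m"
  shows "\<exists>L. is_path V E L (cyc 0) (cyc b) \<and> distinct (map c (walk_edges L)) \<and>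
    (\<forall>e\<in>set (walk_edges L). D < c e) \<and> set L \<subseteq> Hs"
proof (cases "4 \<le> m")
  case m4: True
  show ?thesis
  proof (cases "b \<le> m div 2")
    case True
    have "is_path V E (fwd 0 b) (cyc 0) (cyc b)" using fwd_path[of b 0] b by simp
    then show ?thesis using arc_rb[OF True m4, of 0] fwd_set by blast
  next
    case False
    have d: "m - b \<le> m div 2" using False by simp
    have mb: "m - b < m" using False b by simp
    have "is_path V E (fwd b (m - b)) (cyc b) (cyc (b + (m - b)))" using fwd_path[OF mb, of b] by simp
    moreover have "cyc (b + (m - b)) = cyc 0" using b cyc_eq by simp
    ultimately have p: "is_path V E (rev (fwd b (m - b))) (cyc 0) (cyc b)" using path_rev by fastforce
    have "distinct (map c (walk_edges (rev (fwd b (m - b)))))"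
      using arc_rb(1)[OF d m4, of b] by (simp add: we_rev rev_map[symmetric])
    moreover have "\<forall>e\<in>set (walk_edges (rev (fwd b (m - b)))). D < c e"
      using arc_rb(2)[OF d m4, of b] by (simp add: we_rev)
    moreover have "set (rev (fwd b (m - b))) \<subseteq> Hs" using fwd_set by simp
    ultimately show ?thesis using p by blast
  qed
next
  case False
  then have m3': "m = 3" using m3 by simp
  have p: "is_path V E (fwd 0 b) (cyc 0) (cyc b)" using fwd_path[of b 0] b by simp
  have cl: "map c (walk_edges (fwd 0 b)) = map (\<lambda>t. D + 1 + t) [0..<b]"
  proof -
    have "\<And>t. t < b \<Longrightarrow> c {cyc t, cyc (Suc t)} = D + 1 + t"
    proof -
      fix t assume "t < b"
      then have t2: "t < 2 \<or> t = 2" using b m3' by auto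
      show "c {cyc t, cyc (Suc t)} = D + 1 + t"
      proof (cases "t < 2")
        case True
        then show ?thesis using c_arc[of t] m3' qdef by simp
      next
        case False
        then have "t = 2" using t2 by simp
        then show ?thesis using \<open>t < b\<close> b m3' by simp
      qed
    qed
    then show ?thesis unfolding fwd_cols by simp
  qed
  have "distinct (map c (walk_edges (fwd 0 b)))" unfolding cl by (simp add: distinct_map inj_on_def)
  moreover have "\<forall>e\<in>set (walk_edges (fwd 0 b)). D < c e"
  proof
    fix e assume "e \<in> set (walk_edges (fwd 0 b))"
    then have "c e \<in> set (map c (walk_edges (fwd 0 b)))" by simp
    then show "D < c e" unfolding cl by auto
  qed
  ultimately show ?thesis using p fwd_set by blast
qed

lemma concat_rb:
  assumes pre: "is_path V E pre x u" and L: "is_path V E L (cyc 0) y" and dj: "set pre \<inter> set L = {}"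
    and dpre: "distinct (map c (walk_edges pre))" and lpre: "\<forall>e\<in>set (walk_edges pre). c e < D"
    and dL: "distinct (map c (walk_edges L))" and gL: "\<forall>e\<in>set (walk_edges L). D < c e"
  shows "rainbow_path V E c (pre @ L) x y"
proof -
  have ne: "pre \<noteq> []" "L \<noteq> []" using pre L unfolding is_path_def by auto
  have lh: "last pre = u" "hd L = cyc 0" using pre L unfolding is_path_def by auto
  have "is_path V E (pre @ L) x y" using path_append[OF pre L uv0 dj] .
  moreover have "distinct (map c (walk_edges (pre @ L)))"
    unfolding we_append_rainbow[OF ne] lh c_uv0 using dpre dL lpre gL by (auto, fastforce)
  ultimately show ?thesis unfolding rainbow_path_def by simp
qed

lemma NH_path:
  assumes x: "x \<in> insert w N" and b: "b < m"
  shows "\<exists>P. rainbow_path V E c P x (cyc b)"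
proof -
  obtain L where L: "is_path V E L (cyc 0) (cyc b)" "distinct (map c (walk_edges L))"
    "\<forall>e\<in>set (walk_edges L). D < c e" "set L \<subseteq> Hs" using arc0[OF b] by blast
  have uV: "u \<in> V" "w \<in> V" using uN VZ by auto
  have wu: "w \<noteq> u" using uN wN by auto
  have uH: "u \<notin> Hs" using uN NH by auto
  have cwu: "c {w,u} < D" using c_star uN by simp
  show ?thesis
  proof (cases "x = u")
    case True
    have "rainbow_path V E c ([u] @ L) u (cyc b)"
      by (rule concat_rb[OF path1[OF uV(1)] L(1)]) (use uH L in auto)
    then show ?thesis using True by blast
  next
    case xu: False
    show ?thesis
    proof (cases "x = w")
      case True
      have p: "is_path V E [w,u] w u" using path2[OF _ wu uV(2) uV(1)] star uN by simp
      have "rainbow_path V E c ([w,u] @ L) w (cyc b)"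
        by (rule concat_rb[OF p L(1)]) (use wH uH L cwu in auto)
      then show ?thesis using True by blast
    next
      case False
      then have xN: "x \<in> N" using x by simp
      have xV: "x \<in> V" using xN VZ by auto
      have xw: "x \<noteq> w" using xN wN by auto
      have xH: "x \<notin> Hs" using xN NH by auto
      have exw: "{x,w} \<in> E" using bspec[OF star xN] by (simp add: insert_commute)
      have ewu: "{w,u} \<in> E" using star uN by simp
      have p: "is_path V E [x,w,u] x u" unfolding is_path_def using xV uV exw ewu xw xu wu by simp
      have cxw: "c {x,w} < D" using bspec[OF c_star xN] by (simp add: insert_commute)
      have "{x,w} \<noteq> {w,u}" using xu xw by (auto simp: doubleton_eq_iff)
      then have "c {x,w} \<noteq> c {w,u}" using properD[OF cprop exw ewu] by simp
      then have "rainbow_path V E c ([x,w,u] @ L) x (cyc b)"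
        by (intro concat_rb[OF p L(1)]) (use wH uH xH L cwu cxw in auto)
      then show ?thesis by blast
    qed
  qed
qed

lemma HH_path:
  assumes ab: "a < b" "b < m"
  shows "\<exists>P. rainbow_path V E c P (cyc a) (cyc b)"
proof (cases "b - a \<le> m div 2")
  case True
  have p: "is_path V E (fwd a (b - a)) (cyc a) (cyc b)" using fwd_path[of "b - a" a] ab by simp
  have "distinct (map c (walk_edges (fwd a (b - a))))"
  proof (cases "4 \<le> m")
    case True2: True
    then show ?thesis using arc_rb(1)[OF True True2] by simp
  next
    case False
    then have "b - a \<le> 1" using True m3 by simp
    then have "length (walk_edges (fwd a (b - a))) \<le> 1" using we_len[of "fwd a (b-a)"] fwd_len by simp
    then show ?thesis by (cases "walk_edges (fwd a (b - a))") auto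
  qed
  then show ?thesis using p unfolding rainbow_path_def by blast
next
  case False
  define d where "d = m - (b - a)"
  have d: "d \<le> m div 2" "d < m" unfolding d_def using False ab by auto
  have "is_path V E (fwd b d) (cyc b) (cyc (b + d))" using fwd_path[OF d(2)] by simp
  moreover have "cyc (b + d) = cyc a" using cyc_eq ab unfolding d_def by simp
  ultimately have p: "is_path V E (fwd b d) (cyc b) (cyc a)" by simp
  have "distinct (map c (walk_edges (fwd b d)))"
  proof (cases "4 \<le> m")
    case True2: True
    then show ?thesis using arc_rb(1)[OF d(1) True2] by simp
  next
    case False
    then have "d \<le> 1" using d m3 by simp
    then have "length (walk_edges (fwd b d)) \<le> 1" using we_len[of "fwd b d"] fwd_len by simp
    then show ?thesis by (cases "walk_edges (fwd b d)") auto
  qed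
  then have "rainbow_path V E c (fwd b d) (cyc b) (cyc a)" using p unfolding rainbow_path_def by blast
  then have "rainbow_path V E c (rev (fwd b d)) (cyc a) (cyc b)" by (rule rainbow_rev)
  then show ?thesis by blast
qed

lemma rc: "rainbow_connected V E c"
  unfolding rainbow_connected_def
proof (intro ballI impI)
  fix a b assume a: "a \<in> V" and b: "b \<in> V" and ab: "a \<noteq> b"
  have Hc: "\<exists>t<m. x = cyc t" if "x \<in> Hs" for x using that cyc_img by auto
  show "\<exists>p. rainbow_path V E c p a b"
  proof (cases "a \<in> Hs")
    case aH: True
    obtain i where i: "i < m" "a = cyc i" using Hc aH by blast
    show ?thesis
    proof (cases "b \<in> Hs")
      case True
      obtain j where j: "j < m" "b = cyc j" using Hc True by blast
      have "i \<noteq> j" using ab i j by auto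
      then show ?thesis
      proof (cases "i < j")
        case True then show ?thesis using HH_path[OF True j(1)] i j by simp
      next
        case False
        then have "j < i" using \<open>i \<noteq> j\<close> by simp
        then obtain P where "rainbow_path V E c P b a" using HH_path[OF _ i(1)] i j by blast
        then have "rainbow_path V E c (rev P) a b" by (rule rainbow_rev)
        then show ?thesis by blast
      qed
    next
      case False
      then have "b \<in> insert w N" using b VZ by auto
      then obtain P where "rainbow_path V E c P b a" using NH_path[OF _ i(1)] i by blast
      then have "rainbow_path V E c (rev P) a b" by (rule rainbow_rev)
      then show ?thesis by blast
    qed
  next
    case aN: False
    then have aZ: "a \<in> insert w N" using a VZ by auto
    show ?thesis
    proof (cases "b \<in> Hs")
      case True
      obtain j where j: "j < m" "b = cyc j" using Hc True by blast
      then show ?thesis using NH_path[OF aZ j(1)] by simp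
    next
      case False
      then have bZ: "b \<in> insert w N" using b VZ by auto
      have wV: "w \<in> V" using VZ by auto
      show ?thesis
      proof (cases "a = w")
        case True
        then have bN: "b \<in> N" using bZ ab by auto
        have "is_path V E [w,b] w b" using path2[OF _ _ wV b] star bN ab True by simp
        then have "rainbow_path V E c [w,b] w b" unfolding rainbow_path_def by simp
        then show ?thesis using True by blast
      next
        case anw: False
        then have aN': "a \<in> N" using aZ by simp
        show ?thesis
        proof (cases "b = w")
          case True
          have "{a,w} \<in> E" using bspec[OF star aN'] by (simp add: insert_commute)
          then have "is_path V E [a,w] a w" using path2[OF _ anw a wV] by simp
          then have "rainbow_path V E c [a,w] a w" unfolding rainbow_path_def by simp
          then show ?thesis using True by blast
        next
          case False
          then have bN: "b \<in> N" using bZ by simp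
          have e1: "{a,w} \<in> E" using bspec[OF star aN'] by (simp add: insert_commute)
          have e2: "{w,b} \<in> E" using star bN by simp
          have p: "is_path V E [a,w,b] a b" unfolding is_path_def using a b wV e1 e2 ab anw False by simp
          have "{a,w} \<noteq> {w,b}" using ab anw by (auto simp: doubleton_eq_iff)
          then have "c {a,w} \<noteq> c {w,b}" using properD[OF cprop e1 e2] by simp
          then have "rainbow_path V E c [a,w,b] a b" using p unfolding rainbow_path_def by simp
          then show ?thesis by blast
        qed
      qed
    qed
  qed
qed

end

lemma cross_list: "xs \<noteq> [] \<Longrightarrow> hd xs \<in> A \<Longrightarrow> last xs \<notin> A \<Longrightarrow> \<exists>i. Suc i < length xs \<and> xs!i \<in> A \<and> xs!Suc i \<notin> A"
proof (induction xs)
  case Nil then show ?case by simp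
next
  case (Cons a xs)
  show ?case
  proof (cases "xs = []")
    case True then show ?thesis using Cons.prems by simp
  next
    case False
    show ?thesis
    proof (cases "hd xs \<in> A")
      case True
      then obtain i where "Suc i < length xs" "xs!i \<in> A" "xs!Suc i \<notin> A" using Cons.IH False Cons.prems by auto
      then show ?thesis by (intro exI[of _ "Suc i"]) simp
    next
      case hdA: False
      have "(a # xs) ! 0 \<in> A" using Cons.prems by simp
      moreover have "(a # xs) ! Suc 0 \<notin> A" using hdA False by (simp add: hd_conv_nth)
      moreover have "Suc 0 < length (a # xs)" using False by simp
      ultimately show ?thesis by blast
    qed
  qed
qed

lemma mod_inj_lt: "(t1::nat) < m \<Longrightarrow> t2 < m \<Longrightarrow> (t1 + r) mod m = (t2 + r) mod m \<Longrightarrow> t1 = t2"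
proof (rule ccontr)
  assume a: "t1 < m" "t2 < m" "(t1 + r) mod m = (t2 + r) mod m" "t1 \<noteq> t2"
  show False
  proof (cases "t1 < t2")
    case True
    then have "m dvd (t2 + r - (t1 + r))" using mod_eq_dvd_iff_nat[of "t1 + r" "t2 + r" m] a(3) by simp
    then have "m dvd (t2 - t1)" by simp
    moreover have "t2 - t1 < m" using a(2) by linarith
    ultimately show False using dvd_pos_small[of m "t2 - t1"] True by simp
  next
    case False
    then have lt: "t2 < t1" using a(4) by simp
    then have "m dvd (t1 + r - (t2 + r))" using mod_eq_dvd_iff_nat[of "t2 + r" "t1 + r" m] a(3) by simp
    then have "m dvd (t1 - t2)" by simp
    moreover have "t1 - t2 < m" using a(1) by linarith
    ultimately show False using dvd_pos_small[of m "t1 - t2"] lt by simp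
  qed
qed

lemma adj_col:
  fixes m q t :: nat
  assumes m3: "3 \<le> m" and qd: "q = (m+1) div 2" and t: "t < m" and tn: "m = 3 \<longrightarrow> t < 2"
  shows "t mod q \<noteq> (Suc t mod m) mod q"
proof (cases "Suc t < m")
  case True
  have q2: "2 \<le> q" using qd m3 by simp
  have "Suc t mod q \<noteq> t mod q" using q2 by (simp add: mod_Suc)
  then show ?thesis using True by simp
next
  case False
  then have tm: "Suc t = m" using t by simp
  then have m4: "4 \<le> m" using tn m3 by auto
  have "Suc t mod m = 0" using tm by simp
  moreover have "t mod q \<noteq> 0"
  proof
    assume "t mod q = 0"
    then have "q dvd t" by (simp add: dvd_eq_mod_eq_0)
    moreover have "q < t" using m4 qd tm by simp
    moreover have "t < 2 * q" using qd tm by simp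
    ultimately show False using dvd_between by blast
  qed
  ultimately show ?thesis by simp
qed

theorem proposition2p3:
  fixes V :: "'a set" and E :: "'a set set" and w :: 'a
  assumes "simple_graph V E"
    and "connected_graph V E"
    and "max_degree V E + 2 \<le> card V"
    and "w \<in> V"
    and "degree V E w = max_degree V E"
    and "hamiltonian (V - closed_nbhd V E w) (del_vertices_E V E (closed_nbhd V E w))"
  shows "real (prc V E) \<le> (real (card V) + real (max_degree V E)) / 2 + 1"
proof -
  note sg = assms(1) and conn = assms(2) and wV = assms(4) and dw = assms(5) and ham = assms(6)
  define D where "D = max_degree V E"
  define N where "N = neighbours V E w"
  define Hs where "Hs = V - insert w N"
  have finV: "finite V" using sg unfolding simple_graph_def by simp
  have Esub: "\<forall>e\<in>E. e \<subseteq> V" and c2: "\<forall>e\<in>E. card e = 2" using sg unfolding simple_graph_def by auto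
  have finE: "finite E" using finite_subset[of E "Pow V"] Esub finV by auto
  have nbr: "neighbours V E x = {u. {x,u} \<in> E}" for x
    unfolding neighbours_def using Esub by (auto simp: insert_commute)
  have degdg: "degree V E x = dg E x" for x
    unfolding degree_def nbr using dg_card_nbr[OF finE c2] by simp
  have dgD: "\<forall>x. dg E x \<le> D"
  proof
    fix x show "dg E x \<le> D"
    proof (cases "x \<in> V")
      case True
      then have "degree V E x \<le> D" unfolding D_def max_degree_def using finV by simp
      then show ?thesis using degdg by simp
    next
      case False
      then have "{e\<in>E. x \<in> e} = {}" using Esub by auto
      then have "dg E x = 0" unfolding dg_def by (simp only: card.empty)
      then show ?thesis by simp
    qed
  qed
  have cZ: "closed_nbhd V E w = insert w N" unfolding closed_nbhd_def N_def by simp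
  have wN: "w \<notin> N"
  proof
    assume "w \<in> N"
    then have "{w,w} \<in> E" unfolding N_def nbr by simp
    then show False using c2 by force
  qed
  have NV: "N \<subseteq> V" unfolding N_def neighbours_def by auto
  have finN: "finite N" using finite_subset[OF NV finV] .
  have cN: "card N = D" using dw unfolding N_def degree_def D_def by simp
  have star: "\<forall>x\<in>N. {w,x} \<in> E" unfolding N_def nbr by simp
  obtain p where pd: "distinct p" and ps: "set p = Hs" and p3: "3 \<le> length p"
    and pw: "set (walk_edges p) \<subseteq> del_vertices_E V E (closed_nbhd V E w)"
    and plh: "{last p, hd p} \<in> del_vertices_E V E (closed_nbhd V E w)"
    using ham unfolding hamiltonian_def cZ Hs_def by blast
  have delE: "del_vertices_E V E S \<subseteq> E" for S unfolding del_vertices_E_def by auto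
  define m where "m = length p"
  have m3: "3 \<le> m" using p3 unfolding m_def .
  have cHs: "card Hs = m" unfolding m_def using distinct_card[OF pd] ps by simp
  have HV: "Hs \<subseteq> V" unfolding Hs_def by auto
  have ZV: "insert w N \<subseteq> V" using wV NV by auto
  have cV: "card V = D + 1 + m"
  proof -
    have "card V = card (insert w N) + card Hs" unfolding Hs_def
      using card_Diff_subset[OF finite_subset[OF ZV finV] ZV] card_mono[OF finV ZV] by simp
    then show ?thesis using cHs cN wN finN by simp
  qed
  obtain u v0 where uN: "u \<in> N" and v0H: "v0 \<in> Hs" and uv0E: "{u,v0} \<in> E"
  proof -
    have "Hs \<noteq> {}" using cHs m3 by auto
    then obtain h where hH: "h \<in> Hs" by blast
    then have "h \<in> V" using HV by auto
    then obtain qq where qq: "is_path V E qq w h" using conn wV unfolding connected_graph_def by blast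
    then have qq1: "qq \<noteq> []" "hd qq = w" "last qq = h" "set (walk_edges qq) \<subseteq> E" "set qq \<subseteq> V"
      unfolding is_path_def by auto
    have "h \<notin> insert w N" using hH unfolding Hs_def by simp
    then obtain i where i: "Suc i < length qq" "qq!i \<in> insert w N" "qq!Suc i \<notin> insert w N"
      using cross_list[OF qq1(1), of "insert w N"] qq1 by auto
    have eE: "{qq!i, qq!Suc i} \<in> E" using qq1(4) we_set_sub[of qq E] i(1) by simp
    have sV: "qq!Suc i \<in> V" using qq1(5) i(1) by (meson nth_mem subsetD)
    have "qq!i \<noteq> w"
    proof
      assume "qq!i = w"
      then have "qq!Suc i \<in> N" using eE unfolding N_def nbr by simp
      then show False using i(3) by simp
    qed
    then have "qq!i \<in> N" using i(2) by simp
    moreover have "qq!Suc i \<in> Hs" using sV i(3) unfolding Hs_def by simp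
    ultimately show ?thesis using that eE by blast
  qed
  obtain r where r: "r < m" "p!r = v0" using v0H ps unfolding m_def by (metis in_set_conv_nth)
  define cyc where "cyc t = p ! ((t + r) mod m)" for t
  have m0: "0 < m" using m3 by simp
  have pedge: "{p!j, p!(Suc j mod m)} \<in> E" if "j < m" for j
  proof (cases "Suc j < m")
    case True
    have "{p!j, p!Suc j} \<in> E" using pw delE we_set_sub[of p E] True unfolding m_def by blast
    then show ?thesis using True by simp
  next
    case False
    then have jm: "Suc j = m" using that by simp
    have "last p = p!j" using jm unfolding m_def by (metis diff_Suc_1 last_conv_nth list.size(3) nat.simps(3))
    moreover have "hd p = p!0" using m3 unfolding m_def by (cases p) auto
    ultimately show ?thesis using plh delE jm by auto
  qed
  interpret C: cycl m cyc Hs E V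
  proof
    show "3 \<le> m" by (rule m3)
    show "cyc (t mod m) = cyc t" for t unfolding cyc_def by (simp add: mod_add_left_eq)
    show "inj_on cyc {..<m}"
    proof (rule inj_onI)
      fix x y assume xy: "x \<in> {..<m}" "y \<in> {..<m}" "cyc x = cyc y"
      have "(x + r) mod m = (y + r) mod m"
        using xy(3) pd m0 unfolding cyc_def m_def by (simp add: nth_eq_iff_index_eq)
      then show "x = y" using mod_inj_lt xy(1,2) by auto
    qed
    show "cyc ` {..<m} = Hs"
    proof
      show "cyc ` {..<m} \<subseteq> Hs" unfolding cyc_def using ps m0 unfolding m_def by auto
      show "Hs \<subseteq> cyc ` {..<m}"
      proof
        fix h assume "h \<in> Hs"
        then obtain j where j: "j < m" "p!j = h" using ps unfolding m_def by (metis in_set_conv_nth)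
        define t where "t = (j + m - r) mod m"
        have "(t + r) mod m = j"
        proof -
          have "(t + r) mod m = (j + m - r + r) mod m" unfolding t_def by (simp add: mod_add_left_eq)
          also have "\<dots> = (j + m) mod m" using r by simp
          finally show ?thesis using j by simp
        qed
        then have "cyc t = h" unfolding cyc_def using j by simp
        moreover have "t < m" unfolding t_def using m0 by simp
        ultimately show "h \<in> cyc ` {..<m}" by blast
      qed
    qed
    show "{cyc t, cyc (Suc t)} \<in> E" for t
    proof -
      have "(Suc t + r) mod m = Suc ((t + r) mod m) mod m" by (simp add: mod_Suc_eq)
      then show ?thesis unfolding cyc_def using pedge[of "(t + r) mod m"] m0 by simp
    qed
    show "Hs \<subseteq> V" by (rule HV)
  qed
  have cyc0: "cyc 0 = v0" unfolding cyc_def using r by simp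
  have cycH: "cyc t \<in> Hs" for t by (rule C.cyc_in)
  define ce where "ce t = {cyc t, cyc (Suc t)}" for t
  define nn where "nn = (if m = 3 then 2 else m)"
  have nnm: "nn \<le> m" unfolding nn_def using m3 by simp
  define NE where "NE = ce ` {..<nn}"
  define q where "q = (m+1) div 2"
  have q2: "2 \<le> q" unfolding q_def using m3 by simp
  have ceE: "ce t \<in> E" for t unfolding ce_def by (rule C.cyc_edge)
  have ceH: "ce t \<subseteq> Hs" for t unfolding ce_def using cycH by simp
  have NEE: "NE \<subseteq> E" unfolding NE_def using ceE by auto
  have ce_inj: "t = s" if ts: "t < m" "s < m" "ce t = ce s" for t s
  proof -
    have "cyc t = cyc s \<and> cyc (Suc t) = cyc (Suc s) \<or> cyc t = cyc (Suc s) \<and> cyc (Suc t) = cyc s"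
      using ts(3) unfolding ce_def by (auto simp: doubleton_eq_iff)
    then show ?thesis
    proof
      assume "cyc t = cyc s \<and> cyc (Suc t) = cyc (Suc s)"
      then have "t mod m = s mod m" using C.cyc_eq by simp
      then show ?thesis using ts by simp
    next
      assume a: "cyc t = cyc (Suc s) \<and> cyc (Suc t) = cyc s"
      then have e1: "t = Suc s mod m" and e2: "s = Suc t mod m" using C.cyc_eq ts by auto
      show ?thesis
      proof (cases "Suc s < m")
        case True
        then have "t = Suc s" using e1 by simp
        then have ss: "s = Suc (Suc s) mod m" using e2 by simp
        show ?thesis
        proof (cases "Suc (Suc s) < m")
          case True2: True then show ?thesis using ss by simp
        next
          case False
          then have "Suc (Suc s) = m" using True by simp
          then show ?thesis using ss m3 by simp
        qed
      next
        case False
        then have "Suc s = m" using ts by simp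
        then have "t = 0" using e1 by simp
        then have "s = 1" using e2 m3 by simp
        then show ?thesis using \<open>Suc s = m\<close> m3 by simp
      qed
    qed
  qed
  define ix where "ix e = (SOME t. t < nn \<and> e = ce t)" for e
  have ix: "ix (ce t) = t" if "t < nn" for t
  proof -
    have "\<exists>s. s < nn \<and> ce t = ce s" using that by blast
    then have "ix (ce t) < nn \<and> ce t = ce (ix (ce t))" unfolding ix_def by (rule someI_ex)
    then show ?thesis using ce_inj[of "ix (ce t)" t] that nnm by auto
  qed
  define G where "G = E - NE"
  have D1: "1 \<le> D" using cN uN finN by (metis card_0_eq empty_iff not_less_eq_eq One_nat_def le_zero_eq not_one_le_zero)
  have uH: "u \<notin> Hs" using uN unfolding Hs_def by simp
  have e0G: "{u,v0} \<in> G" unfolding G_def using uv0E ceH uH unfolding NE_def by auto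
  have wnot: "w \<notin> {u,v0}" using uN wN v0H unfolding Hs_def by auto
  obtain c0 where c0r: "c0 ` G \<subseteq> {..D}" and c0p: "proper_colouring G c0" and c0e: "c0 {u,v0} = D"
    and c0w: "\<forall>e\<in>G. w \<in> e \<longrightarrow> c0 e \<noteq> D"
  proof -
    have "finite G" unfolding G_def using finE by simp
    moreover have "\<forall>e\<in>G. card e = 2" unfolding G_def using c2 by simp
    moreover have "\<forall>x. dg G x \<le> D" using dgD dg_mono[OF finE, of G] unfolding G_def by (meson Diff_subset le_trans)
    ultimately show ?thesis using vplus[of G D "{u,v0}" w] D1 e0G wnot that by blast
  qed
  define c where "c e = (if e \<in> NE then D + 1 + (ix e mod q) else c0 e)" for e
  define k where "k = D + 1 + q"
  have crange: "c ` E \<subseteq> {..<k}"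
  proof
    fix x assume "x \<in> c ` E"
    then obtain e where e: "e \<in> E" "x = c e" by blast
    show "x \<in> {..<k}"
    proof (cases "e \<in> NE")
      case True
      have "ix e mod q < q" using q2 by simp
      then show ?thesis using e True unfolding c_def k_def by simp
    next
      case False
      then have "e \<in> G" using e unfolding G_def by simp
      then have "c0 e \<le> D" using c0r by auto
      then show ?thesis using e False unfolding c_def k_def by simp
    qed
  qed
  have carc: "c (ce t) = D + 1 + ((t mod m) mod q)" if "4 \<le> m \<or> t mod m < 2" for t
  proof -
    have tn: "t mod m < nn" unfolding nn_def using that m0 by auto
    have "ce t = ce (t mod m)" unfolding ce_def using C.cyc_mod by (metis mod_Suc_eq)
    then have "ce t \<in> NE" "ix (ce t) = t mod m" using ix[OF tn] tn unfolding NE_def by auto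
    then show ?thesis unfolding c_def by simp
  qed
  have cproper: "proper_colouring E c"
    unfolding proper_colouring_def
  proof (intro ballI impI)
    fix e f assume e: "e \<in> E" and f: "f \<in> E" and ef: "e \<noteq> f \<and> e \<inter> f \<noteq> {}"
    show "c e \<noteq> c f"
    proof (cases "e \<in> NE")
      case eN: True
      show ?thesis
      proof (cases "f \<in> NE")
        case fN: True
        obtain t where t: "t < nn" "e = ce t" using eN unfolding NE_def by auto
        obtain s where s: "s < nn" "f = ce s" using fN unfolding NE_def by auto
        have tm: "t < m" "s < m" using t s nnm by auto
        have ts: "t \<noteq> s" using ef t s by auto
        have ce: "c e = D + 1 + t mod q" "c f = D + 1 + s mod q"
          unfolding c_def using eN fN ix t s by auto
        have "cyc t = cyc (Suc s) \<or> cyc (Suc t) = cyc s"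
        proof -
          have "cyc t = cyc s \<or> cyc t = cyc (Suc s) \<or> cyc (Suc t) = cyc s \<or> cyc (Suc t) = cyc (Suc s)"
            using ef t s unfolding ce_def by auto
          moreover have "cyc t \<noteq> cyc s" using C.cyc_eq tm ts by simp
          moreover have "cyc (Suc t) \<noteq> cyc (Suc s)"
          proof
            assume "cyc (Suc t) = cyc (Suc s)"
            then have "Suc t mod m = Suc s mod m" using C.cyc_eq by simp
            then have "Suc (t mod m) mod m = Suc (s mod m) mod m" by (simp add: mod_Suc_eq)
            then have "t = s" using tm mod_inj_lt[of t m s 1] by simp
            then show False using ts by simp
          qed
          ultimately show ?thesis by blast
        qed
        then show ?thesis
        proof
          assume "cyc t = cyc (Suc s)"
          then have "t = Suc s mod m" using C.cyc_eq tm by simp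
          moreover have "m = 3 \<longrightarrow> s < 2" using s(1) unfolding nn_def by (auto split: if_splits)
          then have "s mod q \<noteq> (Suc s mod m) mod q" using adj_col[OF m3 q_def tm(2)] by blast
          ultimately show ?thesis using ce by simp
        next
          assume "cyc (Suc t) = cyc s"
          then have "s = Suc t mod m" using C.cyc_eq tm by simp
          moreover have "m = 3 \<longrightarrow> t < 2" using t(1) unfolding nn_def by (auto split: if_splits)
          then have "t mod q \<noteq> (Suc t mod m) mod q" using adj_col[OF m3 q_def tm(1)] by blast
          ultimately show ?thesis using ce by simp
        qed
      next
        case fN: False
        then have "f \<in> G" using f unfolding G_def by simp
        then have "c0 f \<le> D" using c0r by auto
        then show ?thesis using eN fN unfolding c_def by simp
      qed
    next
      case eN: False
      then have eG: "e \<in> G" using e unfolding G_def by simp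
      show ?thesis
      proof (cases "f \<in> NE")
        case True
        have "c0 e \<le> D" using c0r eG by auto
        then show ?thesis using eN True unfolding c_def by simp
      next
        case False
        then have "f \<in> G" using f unfolding G_def by simp
        then show ?thesis using properD[OF c0p eG] ef eN False unfolding c_def by simp
      qed
    qed
  qed
  have VZ: "V = insert w N \<union> Hs" unfolding Hs_def using ZV by auto
  have NH: "N \<inter> Hs = {}" unfolding Hs_def by auto
  have wH: "w \<notin> Hs" unfolding Hs_def by simp
  have notNE: "e \<notin> NE" if "x \<in> e" "x \<notin> Hs" for e x using that ceH unfolding NE_def by auto
  have cuv: "c {u, cyc 0} = D" using c0e notNE[of u "{u,v0}"] uH cyc0 unfolding c_def by simp
  have cstar: "\<forall>x\<in>N. c {w,x} < D"
  proof
    fix x assume xN: "x \<in> N"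
    have nNE: "{w,x} \<notin> NE" using notNE[of w "{w,x}"] wH by simp
    then have "{w,x} \<in> G" using star xN unfolding G_def by simp
    then have "c0 {w,x} \<le> D" "c0 {w,x} \<noteq> D" using c0r c0w by auto
    then show "c {w,x} < D" using nNE unfolding c_def by simp
  qed
  interpret R: rb m cyc Hs E V w N u D c q
  proof
    show "V = insert w N \<union> Hs" by (rule VZ)
    show "w \<notin> N" by (rule wN)
    show "w \<notin> Hs" by (rule wH)
    show "N \<inter> Hs = {}" by (rule NH)
    show "\<forall>x\<in>N. {w, x} \<in> E" by (rule star)
    show "u \<in> N" by (rule uN)
    show "{u, cyc 0} \<in> E" using uv0E cyc0 by simp
    show "proper_colouring E c" by (rule cproper)
    show "c {u, cyc 0} = D" by (rule cuv)
    show "\<forall>x\<in>N. c {w, x} < D" by (rule cstar)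
    show "c {cyc t, cyc (Suc t)} = D + 1 + t mod m mod q" if "4 \<le> m \<or> t mod m < 2" for t
      using carc[OF that] unfolding ce_def .
    show "q = (m + 1) div 2" by (rule q_def)
  qed
  have "rainbow_connected V E c" by (rule R.rc)
  then have "prc V E \<le> k" unfolding prc_def using crange cproper by (intro Least_le) blast
  then have "real (prc V E) \<le> real k" by simp
  also have "\<dots> \<le> (real (card V) + real D) / 2 + 1"
  proof -
    have "2 * q \<le> m + 1" unfolding q_def by simp
    then have "2 * real q \<le> real m + 1" by linarith
    then show ?thesis unfolding k_def using cV by simp
  qed
  finally show ?thesis unfolding D_def .
qed


end
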